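(* Let $(X,d)$ be a u.l.f. metric space, $h\colon X\to\mathbb{R}$ coarse, and $\beta\in\mathbb{R}$. Let $\varphi$ be a state on $\ell_\infty(X)$. Then $\varphi\circ E$ is a $(\sigma_h,\beta)$-KMS state on $\mathrm{C}^*_u(X)$ if and only if for every partial translation $f\colon A\to f(A)$ of $X$, $$\varphi(\chi_{f(A)})=\varphi(g_f),$$ where $g_f\in\ell_\infty(X)$ is given by $g_f(x)=e^{\beta(h(x)-h(f(x)))}$ for $x\in A$ and $g_f(x)=0$ for $x\notin A$.
   Context: A metric space is u.l.f. if for every $r>0$ the cardinalities of its balls of radius $r$ are uniformly bounded. $\mathrm{C}^*_u(X)$ is the norm closure of the $^*$-algebra of operators $a$ on $\ell_2(X)$ with $\sup\{d(x,y):a_{x,y}\neq0\}<\infty$, $a_{x,y}=\langle a\delta_y,\delta_x\rangle$. $\ell_\infty(X)$ is identified with the diagonal operators; $\chi_B$ is the projection onto $\ell_2(B)$; $E\colon\mathrm{C}^*_u(X)\to\ell_\infty(X)$ is the canonical conditional expectation keeping only the diagonal entries $a_{x,x}$. A partial translation of $X$ is a bijection $f\colon A\to B$ between subsets of $X$ with $\sup_{x\in A}d(x,f(x))<\infty$ (so $g_f$ is bounded). $h$ is coarse if for each $r>0$ there is $s>0$ with $d(x,y)<r\Rightarrow|h(x)-h(y)|<s$. $\sigma_{h,t}(a)=e^{it\bar h}ae^{-it\bar h}$ with $e^{it\bar h}\delta_x=e^{ith(x)}\delta_x$. A state $\varphi$ is $(\sigma_h,\beta)$-KMS if $\varphi(a\sigma_{h,i\beta}(b))=\varphi(ba)$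 for all $a$ and all analytic $b$ (those for which $t\mapsto\sigma_{h,t}(b)$ extends to an entire function). *)

theory Defs
  imports "HOL-Analysis.Analysis"
begin

text \<open>Operators on ell2(X) are represented by their matrices
  a x y = <a delta_y, delta_x>, i.e. functions of type 'a => 'a => complex.
  The metric space X is the whole type 'a (class metric_space).\<close>

type_synonym 'a mat = "'a \<Rightarrow> 'a \<Rightarrow> complex"

definition ulf :: "'a::metric_space itself \<Rightarrow> bool" where
  "ulf _ \<longleftrightarrow> (\<forall>r>0. \<exists>N::nat. \<forall>x::'a. finite (ball x r) \<and> card (ball x r) \<le> N)"

definition coarse_fun :: "('a::metric_space \<Rightarrow> real) \<Rightarrow> bool" where
  "coarse_fun h \<longleftrightarrow> (\<forall>r>0. \<exists>s>0. \<forall>x y. dist x y < r \<longrightarrow> \<bar>h x - h y\<bar> < s)"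

definition in_l2 :: "('a \<Rightarrow> complex) \<Rightarrow> bool" where
  "in_l2 v \<longleftrightarrow> (\<lambda>x. (cmod (v x))\<^sup>2) summable_on UNIV"

definition l2norm :: "('a \<Rightarrow> complex) \<Rightarrow> real" where
  "l2norm v = sqrt (infsum (\<lambda>x. (cmod (v x))\<^sup>2) UNIV)"

definition mat_apply :: "'a mat \<Rightarrow> ('a \<Rightarrow> complex) \<Rightarrow> ('a \<Rightarrow> complex)" where
  "mat_apply a v = (\<lambda>x. infsum (\<lambda>y. a x y * v y) UNIV)"

definition bdd_op :: "'a mat \<Rightarrow> bool" where
  "bdd_op a \<longleftrightarrow> (\<exists>C. \<forall>v. in_l2 v \<longrightarrow>
      (\<forall>x. (\<lambda>y. a x y * v y) summable_on UNIV) \<and> in_l2 (mat_apply a v) \<and>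
      l2norm (mat_apply a v) \<le> C * l2norm v)"

definition opnorm :: "'a mat \<Rightarrow> real" where
  "opnorm a = Sup {l2norm (mat_apply a v) | v. in_l2 v \<and> l2norm v \<le> 1}"

definition mat_add :: "'a mat \<Rightarrow> 'a mat \<Rightarrow> 'a mat" where
  "mat_add a b = (\<lambda>x y. a x y + b x y)"

definition mat_sub :: "'a mat \<Rightarrow> 'a mat \<Rightarrow> 'a mat" where
  "mat_sub a b = (\<lambda>x y. a x y - b x y)"

definition mat_scale :: "complex \<Rightarrow> 'a mat \<Rightarrow> 'a mat" where
  "mat_scale c a = (\<lambda>x y. c * a x y)"

definition mat_mult :: "'a mat \<Rightarrow> 'a mat \<Rightarrow> 'a mat" where
  "mat_mult a b = (\<lambda>x z. infsum (\<lambda>y. a x y * b y z) UNIV)"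

definition mat_adj :: "'a mat \<Rightarrow> 'a mat" where
  "mat_adj a = (\<lambda>x y. cnj (a y x))"

definition mat_one :: "'a mat" where
  "mat_one = (\<lambda>x y. if x = y then 1 else 0)"

definition finite_prop :: "'a::metric_space mat \<Rightarrow> bool" where
  "finite_prop a \<longleftrightarrow> (\<exists>R. \<forall>x y. a x y \<noteq> 0 \<longrightarrow> dist x y \<le> R)"

definition in_roe :: "'a::metric_space mat \<Rightarrow> bool" where
  "in_roe a \<longleftrightarrow> bdd_op a \<and>
     (\<forall>\<epsilon>>0. \<exists>b. bdd_op b \<and> finite_prop b \<and> opnorm (mat_sub a b) < \<epsilon>)"

definition cond_exp :: "'a mat \<Rightarrow> ('a \<Rightarrow> complex)" where
  "cond_exp a = (\<lambda>x. a x x)"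

definition in_linfty :: "('a \<Rightarrow> complex) \<Rightarrow> bool" where
  "in_linfty f \<longleftrightarrow> bounded (range f)"

definition nonneg_cplx :: "complex \<Rightarrow> bool" where
  "nonneg_cplx z \<longleftrightarrow> Im z = 0 \<and> Re z \<ge> 0"

definition linfty_state :: "(('a \<Rightarrow> complex) \<Rightarrow> complex) \<Rightarrow> bool" where
  "linfty_state \<phi> \<longleftrightarrow>
     (\<forall>f g. in_linfty f \<longrightarrow> in_linfty g \<longrightarrow> \<phi> (\<lambda>x. f x + g x) = \<phi> f + \<phi> g) \<and>
     (\<forall>c f. in_linfty f \<longrightarrow> \<phi> (\<lambda>x. c * f x) = c * \<phi> f) \<and>
     (\<forall>f. in_linfty f \<longrightarrow> nonneg_cplx (\<phi> (\<lambda>x. cnj (f x) * f x))) \<and>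
     \<phi> (\<lambda>x. 1) = 1"

definition roe_state :: "('a::metric_space mat \<Rightarrow> complex) \<Rightarrow> bool" where
  "roe_state \<psi> \<longleftrightarrow>
     (\<forall>a b. in_roe a \<longrightarrow> in_roe b \<longrightarrow> \<psi> (mat_add a b) = \<psi> a + \<psi> b) \<and>
     (\<forall>c a. in_roe a \<longrightarrow> \<psi> (mat_scale c a) = c * \<psi> a) \<and>
     (\<forall>a. in_roe a \<longrightarrow> nonneg_cplx (\<psi> (mat_mult (mat_adj a) a))) \<and>
     \<psi> mat_one = 1"

text \<open>sigma_{h,t}(a) = e^{it h} a e^{-it h}, in matrix form.\<close>
definition sigma :: "('a \<Rightarrow> real) \<Rightarrow> real \<Rightarrow> 'a mat \<Rightarrow> 'a mat" where
  "sigma h t a = (\<lambda>x y. exp (\<i> * of_real (t * h x)) * a x y * exp (- \<i> * of_real (t * h y)))"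

definition entire_ext :: "('a::metric_space \<Rightarrow> real) \<Rightarrow> 'a mat \<Rightarrow> (complex \<Rightarrow> 'a mat) \<Rightarrow> bool" where
  "entire_ext h b F \<longleftrightarrow>
     (\<forall>z. in_roe (F z)) \<and>
     (\<forall>t::real. F (of_real t) = sigma h t b) \<and>
     (\<forall>z. \<exists>D. in_roe D \<and>
        ((\<lambda>w. opnorm (mat_sub (mat_sub (F w) (F z)) (mat_scale (w - z) D)) / cmod (w - z))
           \<longlongrightarrow> 0) (at z))"

definition analytic_elt :: "('a::metric_space \<Rightarrow> real) \<Rightarrow> 'a mat \<Rightarrow> bool" where
  "analytic_elt h b \<longleftrightarrow> in_roe b \<and> (\<exists>F. entire_ext h b F)"

text \<open>(sigma_h, beta)-KMS state on C*_u(X); sigma_{h,i beta}(b) = F(i beta)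
  for the (unique) entire extension F.\<close>
definition kms_state :: "('a::metric_space \<Rightarrow> real) \<Rightarrow> real \<Rightarrow> ('a mat \<Rightarrow> complex) \<Rightarrow> bool" where
  "kms_state h \<beta> \<psi> \<longleftrightarrow> roe_state \<psi> \<and>
     (\<forall>a b F. in_roe a \<longrightarrow> in_roe b \<longrightarrow> entire_ext h b F \<longrightarrow>
        \<psi> (mat_mult a (F (\<i> * of_real \<beta>))) = \<psi> (mat_mult b a))"

definition partial_translation :: "('a::metric_space \<Rightarrow> 'a) \<Rightarrow> 'a set \<Rightarrow> bool" where
  "partial_translation f A \<longleftrightarrow> inj_on f A \<and> (\<exists>R. \<forall>x\<in>A. dist x (f x) \<le> R)"

definition chi :: "'a set \<Rightarrow> ('a \<Rightarrow> complex)" where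
  "chi B = (\<lambda>x. if x \<in> B then 1 else 0)"

definition g_fun :: "('a \<Rightarrow> real) \<Rightarrow> real \<Rightarrow> ('a \<Rightarrow> 'a) \<Rightarrow> 'a set \<Rightarrow> ('a \<Rightarrow> complex)" where
  "g_fun h \<beta> f A = (\<lambda>x. if x \<in> A then of_real (exp (\<beta> * (h x - h (f x)))) else 0)"

end

theory Submission
  imports Defs "HOL-Complex_Analysis.Complex_Analysis"
begin

lemma in_linfty_iff: "in_linfty f \<longleftrightarrow> (\<exists>M. \<forall>x. cmod (f x) \<le> M)"
  unfolding in_linfty_def bounded_iff by auto

lemma in_linftyI: "(\<And>x. cmod (f x) \<le> M) \<Longrightarrow> in_linfty f"
  unfolding in_linfty_iff by blast

lemma in_linfty_add: "in_linfty f \<Longrightarrow> in_linfty g \<Longrightarrow> in_linfty (\<lambda>x. f x + g x)"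
  unfolding in_linfty_iff by (meson add_mono norm_triangle_le)

lemma in_linfty_mult: "in_linfty f \<Longrightarrow> in_linfty g \<Longrightarrow> in_linfty (\<lambda>x. f x * g x)"
  unfolding in_linfty_iff
proof (elim exE)
  fix M N assume M: "\<forall>x. cmod (f x) \<le> M" and N: "\<forall>x. cmod (g x) \<le> N"
  have "cmod (f x * g x) \<le> M * N" for x
    unfolding norm_mult using M N by (meson mult_mono norm_ge_zero order_trans)
  then show "\<exists>M. \<forall>x. cmod (f x * g x) \<le> M" by blast
qed

lemma in_linfty_const: "in_linfty (\<lambda>x. c)"
  by (rule in_linftyI[of _ "cmod c"]) simp

lemma in_linfty_sum: "finite V \<Longrightarrow> (\<And>v. v \<in> V \<Longrightarrow> in_linfty (g v)) \<Longrightarrow> in_linfty (\<lambda>x. \<Sum>v\<in>V. g v x)"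
  by (induction V rule: finite_induct) (auto intro: in_linfty_add in_linfty_const)

context
  fixes \<phi> :: "('a \<Rightarrow> complex) \<Rightarrow> complex"
  assumes st: "linfty_state \<phi>"
begin

lemma st_add: "in_linfty f \<Longrightarrow> in_linfty g \<Longrightarrow> \<phi> (\<lambda>x. f x + g x) = \<phi> f + \<phi> g"
  using st unfolding linfty_state_def by blast

lemma st_scale: "in_linfty f \<Longrightarrow> \<phi> (\<lambda>x. c * f x) = c * \<phi> f"
  using st unfolding linfty_state_def by blast

lemma st_pos: "in_linfty f \<Longrightarrow> nonneg_cplx (\<phi> (\<lambda>x. cnj (f x) * f x))"
  using st unfolding linfty_state_def by blast

lemma st_one: "\<phi> (\<lambda>x. 1) = 1"
  using st unfolding linfty_state_def by blast

lemma st_const: "\<phi> (\<lambda>x. c) = c"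
  using st_scale[of "\<lambda>x. 1" c, OF in_linfty_const] st_one by simp

lemma st_diff: "in_linfty f \<Longrightarrow> in_linfty g \<Longrightarrow> \<phi> (\<lambda>x. f x - g x) = \<phi> f - \<phi> g"
proof -
  assume f: "in_linfty f" and g: "in_linfty g"
  have g': "in_linfty (\<lambda>x. (-1) * g x)" using in_linfty_mult[OF in_linfty_const g] .
  have "\<phi> (\<lambda>x. f x - g x) = \<phi> (\<lambda>x. f x + (-1) * g x)" by simp
  also have "\<dots> = \<phi> f + \<phi> (\<lambda>x. (-1) * g x)" by (rule st_add[OF f g'])
  also have "\<dots> = \<phi> f - \<phi> g" using st_scale[OF g, of "-1"] by simp
  finally show ?thesis .
qed

lemma st_sum: "finite V \<Longrightarrow> (\<And>v. v \<in> V \<Longrightarrow> in_linfty (g v)) \<Longrightarrow>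
   \<phi> (\<lambda>x. \<Sum>v\<in>V. g v x) = (\<Sum>v\<in>V. \<phi> (g v))"
proof (induction V rule: finite_induct)
  case empty then show ?case using st_const[of 0] by simp
next
  case (insert v V)
  have "\<phi> (\<lambda>x. \<Sum>w\<in>insert v V. g w x) = \<phi> (\<lambda>x. g v x + (\<Sum>w\<in>V. g w x))"
    using insert by simp
  also have "\<dots> = \<phi> (g v) + \<phi> (\<lambda>x. \<Sum>w\<in>V. g w x)"
    using insert by (intro st_add) (auto intro: in_linfty_sum)
  finally show ?case using insert by simp
qed

lemma st_real_bound:
  assumes "\<And>x. \<bar>r x\<bar> \<le> M"
  shows "Im (\<phi> (\<lambda>x. complex_of_real (r x))) = 0 \<and> \<bar>Re (\<phi> (\<lambda>x. complex_of_real (r x)))\<bar> \<le> M"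
proof -
  let ?r = "\<lambda>x. complex_of_real (r x)"
  have rb: "in_linfty ?r" by (rule in_linftyI[of _ M]) (use assms in auto)
  have pos: "nonneg_cplx (\<phi> (\<lambda>x. complex_of_real (p x)))" if "\<And>x. p x \<ge> 0" "\<And>x. \<bar>p x\<bar> \<le> 2*M" for p
  proof -
    let ?s = "\<lambda>x. complex_of_real (sqrt (p x))"
    have "in_linfty ?s" by (rule in_linftyI[of _ "sqrt (2*M)"]) (use that in auto)
    then have "nonneg_cplx (\<phi> (\<lambda>x. cnj (?s x) * ?s x))" by (rule st_pos)
    moreover have "(\<lambda>x. cnj (?s x) * ?s x) = (\<lambda>x. complex_of_real (p x))"
      using that by (auto simp flip: of_real_mult)
    ultimately show ?thesis by simp
  qed
  have M0: "M \<ge> 0" using assms[of undefined] by simp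
  have "nonneg_cplx (\<phi> (\<lambda>x. complex_of_real (M - r x)))"
  proof (rule pos)
    fix x show "0 \<le> M - r x" "\<bar>M - r x\<bar> \<le> 2 * M" using assms[of x] by auto
  qed
  moreover have "\<phi> (\<lambda>x. complex_of_real (M - r x)) = M - \<phi> ?r"
    using st_diff[OF in_linfty_const rb, of "complex_of_real M"] st_const by simp
  moreover have "nonneg_cplx (\<phi> (\<lambda>x. complex_of_real (M + r x)))"
  proof (rule pos)
    fix x show "0 \<le> M + r x" "\<bar>M + r x\<bar> \<le> 2 * M" using assms[of x] by auto
  qed
  moreover have "\<phi> (\<lambda>x. complex_of_real (M + r x)) = M + \<phi> ?r"
    using st_add[OF in_linfty_const rb, of "complex_of_real M"] st_const by simp
  ultimately show ?thesis unfolding nonneg_cplx_def by auto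
qed

lemma st_bound:
  assumes "\<And>x. cmod (g x) \<le> M"
  shows "cmod (\<phi> g) \<le> 2 * M"
proof -
  let ?a = "\<lambda>x. complex_of_real (Re (g x))" and ?b = "\<lambda>x. complex_of_real (Im (g x))"
  have a: "\<bar>Re (g x)\<bar> \<le> M" and b: "\<bar>Im (g x)\<bar> \<le> M" for x
    using assms[of x] abs_Re_le_cmod abs_Im_le_cmod order_trans by blast+
  have la: "in_linfty ?a" by (rule in_linftyI[of _ M]) (use a in auto)
  have lb: "in_linfty ?b" by (rule in_linftyI[of _ M]) (use b in auto)
  have "g = (\<lambda>x. ?a x + \<i> * ?b x)" by (rule ext) (simp add: complex_eq_iff)
  then have "\<phi> g = \<phi> ?a + \<i> * \<phi> ?b"
    using st_add[OF la in_linfty_mult[OF in_linfty_const lb, of \<i>]] st_scale[OF lb] by simp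
  moreover have "cmod (\<phi> ?a) \<le> M" using st_real_bound[of "\<lambda>x. Re (g x)" M] a by (simp add: cmod_eq_Re)
  moreover have "cmod (\<phi> ?b) \<le> M" using st_real_bound[of "\<lambda>x. Im (g x)" M] b by (simp add: cmod_eq_Re)
  ultimately show ?thesis
    by (metis mult_2 norm_ii norm_mult norm_triangle_le add_mono mult_1)
qed

end

lemma l2norm_sq: "(l2norm v)\<^sup>2 = infsum (\<lambda>x. (cmod (v x))\<^sup>2) UNIV"
proof -
  have "0 \<le> infsum (\<lambda>x. (cmod (v x))\<^sup>2) UNIV" by (rule infsum_nonneg) simp
  then show ?thesis unfolding l2norm_def by simp
qed

lemma l2norm_ge0: "l2norm v \<ge> 0"
proof -
  have "0 \<le> infsum (\<lambda>x. (cmod (v x))\<^sup>2) UNIV" by (rule infsum_nonneg) simp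
  then show ?thesis unfolding l2norm_def by simp
qed

lemma l2_sum_le: "in_l2 p \<Longrightarrow> finite T \<Longrightarrow> (\<Sum>x\<in>T. (cmod (p x))\<^sup>2) \<le> (l2norm p)\<^sup>2"
  unfolding l2norm_sq in_l2_def by (rule finite_sum_le_infsum) auto

lemma fin_supp_infsum:
  fixes u :: "'a \<Rightarrow> 'b::{comm_monoid_add, t2_space}"
  assumes "finite S" "\<And>y. y \<notin> S \<Longrightarrow> u y = 0"
  shows "u summable_on UNIV" "infsum u UNIV = (\<Sum>y\<in>S. u y)"
proof -
  show "u summable_on UNIV"
    using summable_on_cong_neutral[of S UNIV u u] assms by auto
  have "infsum u UNIV = infsum u S"
    by (rule infsum_cong_neutral) (use assms in auto)
  then show "infsum u UNIV = (\<Sum>y\<in>S. u y)" using assms by simp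
qed

lemma l2_fin:
  assumes "finite S" "\<And>y. y \<notin> S \<Longrightarrow> u y = 0"
  shows "in_l2 u" "l2norm u = sqrt (\<Sum>y\<in>S. (cmod (u y))\<^sup>2)"
  using fin_supp_infsum[of S "\<lambda>y. (cmod (u y))\<^sup>2"] assms
  unfolding in_l2_def l2norm_def by auto

lemma apply_fin:
  assumes "finite S" "\<And>y. y \<notin> S \<Longrightarrow> u y = 0"
  shows "mat_apply a u x = (\<Sum>y\<in>S. a x y * u y)"
  unfolding mat_apply_def using fin_supp_infsum(2)[of S "\<lambda>y. a x y * u y"] assms by auto

lemma in_l2_diff:
  assumes "in_l2 p" "in_l2 q"
  shows "in_l2 (\<lambda>x. p x - q x)" "(l2norm (\<lambda>x. p x - q x))\<^sup>2 \<le> 2 * (l2norm p)\<^sup>2 + 2 * (l2norm q)\<^sup>2"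
proof -
  have pt: "(cmod (p x - q x))\<^sup>2 \<le> 2 * (cmod (p x))\<^sup>2 + 2 * (cmod (q x))\<^sup>2" for x
  proof -
    have "cmod (p x - q x) \<le> cmod (p x) + cmod (q x)" by (rule norm_triangle_ineq4)
    then have "(cmod (p x - q x))\<^sup>2 \<le> (cmod (p x) + cmod (q x))\<^sup>2"
      by (simp add: power_mono)
    also have "\<dots> \<le> 2 * (cmod (p x))\<^sup>2 + 2 * (cmod (q x))\<^sup>2"
      by (smt (verit) sum_squares_bound power2_sum)
    finally show ?thesis .
  qed
  have s: "(\<lambda>x. 2 * (cmod (p x))\<^sup>2 + 2 * (cmod (q x))\<^sup>2) summable_on UNIV"
    using assms unfolding in_l2_def
    by (intro summable_on_add summable_on_cmult_right) auto
  show l: "in_l2 (\<lambda>x. p x - q x)"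
    unfolding in_l2_def by (rule summable_on_comparison_test[OF s]) (use pt in auto)
  have "(l2norm (\<lambda>x. p x - q x))\<^sup>2 \<le> infsum (\<lambda>x. 2 * (cmod (p x))\<^sup>2 + 2 * (cmod (q x))\<^sup>2) UNIV"
    unfolding l2norm_sq by (rule infsum_mono[OF _ s]) (use l pt in \<open>auto simp: in_l2_def\<close>)
  also have "\<dots> = 2 * (l2norm p)\<^sup>2 + 2 * (l2norm q)\<^sup>2"
    unfolding l2norm_sq using assms unfolding in_l2_def
    by (subst infsum_add) (auto intro!: summable_on_cmult_right simp: infsum_cmult_right)
  finally show "(l2norm (\<lambda>x. p x - q x))\<^sup>2 \<le> 2 * (l2norm p)\<^sup>2 + 2 * (l2norm q)\<^sup>2" .
qed

lemma in_l2_scale: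
  assumes "in_l2 p"
  shows "in_l2 (\<lambda>x. c * p x)" "l2norm (\<lambda>x. c * p x) = cmod c * l2norm p"
proof -
  show "in_l2 (\<lambda>x. c * p x)" unfolding in_l2_def norm_mult power_mult_distrib
    using assms[unfolded in_l2_def] by (rule summable_on_cmult_right)
  show "l2norm (\<lambda>x. c * p x) = cmod c * l2norm p"
    unfolding l2norm_def norm_mult power_mult_distrib by (simp add: infsum_cmult_right' real_sqrt_mult)
qed

definition bop :: "'a mat \<Rightarrow> real \<Rightarrow> bool" where
  "bop a C \<longleftrightarrow> (\<forall>v. in_l2 v \<longrightarrow> l2norm v \<le> 1 \<longrightarrow>
      (\<forall>x. (\<lambda>y. a x y * v y) summable_on UNIV) \<and> in_l2 (mat_apply a v) \<and>
      l2norm (mat_apply a v) \<le> C)"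

definition fbnd :: "'a mat \<Rightarrow> real \<Rightarrow> bool" where
  "fbnd a C \<longleftrightarrow> C \<ge> 0 \<and> (\<forall>S T v. finite S \<longrightarrow> finite T \<longrightarrow>
      (\<Sum>x\<in>T. (cmod (\<Sum>y\<in>S. a x y * v y))\<^sup>2) \<le> C\<^sup>2 * (\<Sum>y\<in>S. (cmod (v y))\<^sup>2))"

lemma bdd_op_bop: "bdd_op a \<Longrightarrow> \<exists>C. bop a C"
proof -
  assume "bdd_op a"
  then obtain C where C: "\<And>v. in_l2 v \<Longrightarrow> (\<forall>x. (\<lambda>y. a x y * v y) summable_on UNIV) \<and>
     in_l2 (mat_apply a v) \<and> l2norm (mat_apply a v) \<le> C * l2norm v"
    unfolding bdd_op_def by blast
  have "bop a \<bar>C\<bar>"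
    unfolding bop_def
  proof (intro allI impI)
    fix v :: "'a \<Rightarrow> complex" assume v: "in_l2 v" "l2norm v \<le> 1"
    have "C * l2norm v \<le> \<bar>C\<bar>"
    proof -
      have "C * l2norm v \<le> \<bar>C\<bar> * l2norm v" by (rule mult_right_mono) (auto simp: l2norm_ge0)
      also have "\<dots> \<le> \<bar>C\<bar>" by (rule mult_left_le) (use v in auto)
      finally show ?thesis .
    qed
    then show "(\<forall>x. (\<lambda>y. a x y * v y) summable_on UNIV) \<and> in_l2 (mat_apply a v) \<and> l2norm (mat_apply a v) \<le> \<bar>C\<bar>"
      using C[OF v(1)] by auto
  qed
  then show ?thesis by blast
qed

lemma bop_sub:
  assumes "bop a A" "bop b B"
  shows "bop (mat_sub a b) (sqrt (2 * A\<^sup>2 + 2 * B\<^sup>2))"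
  unfolding bop_def
proof (intro allI impI)
  fix v :: "'a \<Rightarrow> complex" assume v: "in_l2 v" "l2norm v \<le> 1"
  note a = assms(1)[unfolded bop_def, rule_format, OF v]
  note b = assms(2)[unfolded bop_def, rule_format, OF v]
  have sm: "\<forall>x. (\<lambda>y. mat_sub a b x y * v y) summable_on UNIV"
  proof
    fix x
    have "(\<lambda>y. a x y * v y + - (b x y * v y)) summable_on UNIV"
      using a b by (intro summable_on_add) (auto simp: summable_on_uminus)
    then show "(\<lambda>y. mat_sub a b x y * v y) summable_on UNIV"
      by (simp add: mat_sub_def algebra_simps)
  qed
  have eq: "mat_apply (mat_sub a b) v = (\<lambda>x. mat_apply a v x - mat_apply b v x)"
  proof
    fix x
    have "infsum (\<lambda>y. a x y * v y + - (b x y * v y)) UNIV = mat_apply a v x + - mat_apply b v x"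
      using a b unfolding mat_apply_def by (subst infsum_add) (auto simp: summable_on_uminus infsum_uminus)
    then show "mat_apply (mat_sub a b) v x = mat_apply a v x - mat_apply b v x"
      unfolding mat_apply_def mat_sub_def by (simp add: algebra_simps)
  qed
  have l: "in_l2 (mat_apply (mat_sub a b) v)" unfolding eq using in_l2_diff a b by blast
  have "(l2norm (mat_apply (mat_sub a b) v))\<^sup>2 \<le> 2 * A\<^sup>2 + 2 * B\<^sup>2"
  proof -
    have "(l2norm (mat_apply (mat_sub a b) v))\<^sup>2 \<le> 2 * (l2norm (mat_apply a v))\<^sup>2 + 2 * (l2norm (mat_apply b v))\<^sup>2"
      unfolding eq using in_l2_diff a b by blast
    moreover have "(l2norm (mat_apply a v))\<^sup>2 \<le> A\<^sup>2" using a l2norm_ge0 by (metis power_mono)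
    moreover have "(l2norm (mat_apply b v))\<^sup>2 \<le> B\<^sup>2" using b l2norm_ge0 by (metis power_mono)
    ultimately show ?thesis by linarith
  qed
  then have "l2norm (mat_apply (mat_sub a b) v) \<le> sqrt (2 * A\<^sup>2 + 2 * B\<^sup>2)"
    using l2norm_ge0 real_le_rsqrt by blast
  then show "(\<forall>x. (\<lambda>y. mat_sub a b x y * v y) summable_on UNIV) \<and> in_l2 (mat_apply (mat_sub a b) v) \<and>
       l2norm (mat_apply (mat_sub a b) v) \<le> sqrt (2 * A\<^sup>2 + 2 * B\<^sup>2)" using sm l by blast
qed

lemma bop_scale:
  assumes "bop a A"
  shows "bop (mat_scale c a) (cmod c * A)"
  unfolding bop_def
proof (intro allI impI)
  fix v :: "'a \<Rightarrow> complex" assume v: "in_l2 v" "l2norm v \<le> 1"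
  note a = assms(1)[unfolded bop_def, rule_format, OF v]
  have sm: "\<forall>x. (\<lambda>y. mat_scale c a x y * v y) summable_on UNIV"
    using a unfolding mat_scale_def by (auto simp: mult.assoc intro: summable_on_cmult_right)
  have eq: "mat_apply (mat_scale c a) v = (\<lambda>x. c * mat_apply a v x)"
    unfolding mat_apply_def mat_scale_def by (auto simp: mult.assoc infsum_cmult_right')
  show "(\<forall>x. (\<lambda>y. mat_scale c a x y * v y) summable_on UNIV) \<and> in_l2 (mat_apply (mat_scale c a) v) \<and>
       l2norm (mat_apply (mat_scale c a) v) \<le> cmod c * A"
    using sm a in_l2_scale[of "mat_apply a v" c] unfolding eq by (auto intro: mult_left_mono)
qed

lemma bop_bdd:
  assumes "bop a C"
  shows "bdd_above {l2norm (mat_apply a v) | v. in_l2 v \<and> l2norm v \<le> 1}"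
  using assms unfolding bop_def by (auto intro!: bdd_aboveI[of _ C])

lemma bop_opnorm:
  assumes "bop a C" "in_l2 v" "l2norm v \<le> 1"
  shows "l2norm (mat_apply a v) \<le> opnorm a"
  unfolding opnorm_def by (rule cSup_upper[OF _ bop_bdd[OF assms(1)]]) (use assms in auto)

lemma zero_l2: "in_l2 (\<lambda>x. 0)" "l2norm (\<lambda>x. 0) = 0"
  unfolding in_l2_def l2norm_def by auto

lemma bop_opnorm_le:
  assumes "bop a C"
  shows "opnorm a \<le> C"
  unfolding opnorm_def
proof (rule cSup_least)
  show "{l2norm (mat_apply a v) |v. in_l2 v \<and> l2norm v \<le> 1} \<noteq> {}"
  proof -
    have "l2norm (mat_apply a (\<lambda>x. 0)) \<in> {l2norm (mat_apply a v) |v. in_l2 v \<and> l2norm v \<le> 1}"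
      using zero_l2 by (smt (verit, best) mem_Collect_eq)
    then show ?thesis by blast
  qed
qed (use assms in \<open>auto simp: bop_def\<close>)

lemma bop_fbnd:
  assumes "bop a C"
  shows "fbnd a (opnorm a)"
  unfolding fbnd_def
proof (intro conjI allI impI)
  show "0 \<le> opnorm a"
    using bop_opnorm[OF assms zero_l2(1)] zero_l2(2) l2norm_ge0 by (metis order_trans zero_le_one)
  fix S T :: "'a set" and v :: "'a \<Rightarrow> complex" assume S: "finite S" and T: "finite T"
  define n2 where "n2 = (\<Sum>y\<in>S. (cmod (v y))\<^sup>2)"
  show "(\<Sum>x\<in>T. (cmod (\<Sum>y\<in>S. a x y * v y))\<^sup>2) \<le> (opnorm a)\<^sup>2 * n2"
  proof (cases "n2 = 0")
    case True
    then have "\<forall>y\<in>S. v y = 0" unfolding n2_def using S by (simp add: sum_nonneg_eq_0_iff)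
    then show ?thesis by (simp add: True)
  next
    case False
    have n2p: "n2 > 0" using False unfolding n2_def by (metis sum_nonneg zero_le_power2 less_eq_real_def)
    define n where "n = sqrt n2"
    have np: "n > 0" using n2p unfolding n_def by simp
    define u where "u = (\<lambda>y. if y \<in> S then v y / n else 0)"
    have u0: "\<And>y. y \<notin> S \<Longrightarrow> u y = 0" unfolding u_def by simp
    have ul: "in_l2 u" using l2_fin[of S u, OF S u0] by blast
    have "l2norm u = sqrt (\<Sum>y\<in>S. (cmod (u y))\<^sup>2)" using l2_fin[of S u, OF S u0] by blast
    also have "(\<Sum>y\<in>S. (cmod (u y))\<^sup>2) = (\<Sum>y\<in>S. (cmod (v y))\<^sup>2 / n2)"
      unfolding u_def n_def using n2p by (intro sum.cong) (auto simp: norm_divide power_divide)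
    also have "\<dots> = 1" using n2p by (simp add: n2_def flip: sum_divide_distrib)
    finally have un: "l2norm u \<le> 1" by simp
    have ma: "mat_apply a u x = (\<Sum>y\<in>S. a x y * v y) / n" for x
      using apply_fin[of S u a x, OF S u0] unfolding u_def by (simp add: sum_divide_distrib)
    have bu: "in_l2 (mat_apply a u)" using assms ul un unfolding bop_def by blast
    have "(\<Sum>x\<in>T. (cmod (mat_apply a u x))\<^sup>2) \<le> (l2norm (mat_apply a u))\<^sup>2"
      by (rule l2_sum_le[OF bu T])
    also have "\<dots> \<le> (opnorm a)\<^sup>2"
      using bop_opnorm[OF assms ul un] l2norm_ge0 by (metis power_mono)
    finally have "(\<Sum>x\<in>T. (cmod (\<Sum>y\<in>S. a x y * v y))\<^sup>2 / n2) \<le> (opnorm a)\<^sup>2"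
      unfolding ma n_def using n2p by (simp add: norm_divide power_divide)
    then show ?thesis using n2p by (simp add: pos_divide_le_eq flip: sum_divide_distrib)
  qed
qed

lemma fbnd_mono: "fbnd a C \<Longrightarrow> C \<le> D \<Longrightarrow> fbnd a D"
  unfolding fbnd_def
  by (smt (verit, ccfv_SIG) mult_right_mono power_mono sum_nonneg zero_le_power2)

lemma fbnd_C0: "fbnd a C \<Longrightarrow> C \<ge> 0" unfolding fbnd_def by blast

lemma fbnd_fin: "fbnd a C \<Longrightarrow> finite S \<Longrightarrow> finite T \<Longrightarrow>
   (\<Sum>x\<in>T. (cmod (\<Sum>y\<in>S. a x y * v y))\<^sup>2) \<le> C\<^sup>2 * (\<Sum>y\<in>S. (cmod (v y))\<^sup>2)"
  unfolding fbnd_def by blast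

lemma fbnd_col: "fbnd a C \<Longrightarrow> finite T \<Longrightarrow> (\<Sum>x\<in>T. (cmod (a x y))\<^sup>2) \<le> C\<^sup>2"
  using fbnd_fin[of a C "{y}" T "\<lambda>_. 1"] by simp

lemma fbnd_entry: "fbnd a C \<Longrightarrow> cmod (a x y) \<le> C"
proof -
  assume f: "fbnd a C"
  have "(cmod (a x y))\<^sup>2 \<le> C\<^sup>2" using fbnd_col[OF f, of "{x}" y] by simp
  then show ?thesis using fbnd_C0[OF f] by (rule power2_le_imp_le)
qed

lemma cnj_sq: "z * cnj z = complex_of_real ((cmod z)\<^sup>2)"
  by (rule complex_norm_square[symmetric])

lemma sum_sing: "(\<Sum>x'\<in>{x}. f x') = f x" by simp

lemma cnj_sq2: "cnj z * z = complex_of_real ((cmod z)\<^sup>2)"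
  by (subst mult.commute) (rule complex_norm_square[symmetric])

lemma fbnd_row: "fbnd a C \<Longrightarrow> finite S \<Longrightarrow> (\<Sum>y\<in>S. (cmod (a x y))\<^sup>2) \<le> C\<^sup>2"
proof -
  assume f: "fbnd a C" and S: "finite S"
  define P where "P = (\<Sum>y\<in>S. (cmod (a x y))\<^sup>2)"
  have P0: "P \<ge> 0" unfolding P_def by (simp add: sum_nonneg)
  have e: "(\<Sum>y\<in>S. a x y * cnj (a x y)) = complex_of_real P"
    by (simp only: cnj_sq of_real_sum P_def)
  have "(\<Sum>x'\<in>{x}. (cmod (\<Sum>y\<in>S. a x' y * cnj (a x y)))\<^sup>2) \<le> C\<^sup>2 * (\<Sum>y\<in>S. (cmod (cnj (a x y)))\<^sup>2)"
    by (rule fbnd_fin[OF f S]) simp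
  then have "(cmod (\<Sum>y\<in>S. a x y * cnj (a x y)))\<^sup>2 \<le> C\<^sup>2 * P"
    unfolding P_def by (simp only: sum_sing complex_mod_cnj)
  then have "P * P \<le> C\<^sup>2 * P" unfolding e using P0 by (simp add: power2_eq_square)
  then have "P \<le> C\<^sup>2"
  proof (cases "P = 0")
    case False
    then have "P > 0" using P0 by simp
    then show ?thesis using \<open>P * P \<le> C\<^sup>2 * P\<close> by (meson mult_right_le_imp_le)
  qed simp
  then show ?thesis unfolding P_def .
qed

lemma nonneg_summable_bound:
  fixes f :: "'a \<Rightarrow> real"
  assumes "\<And>x. f x \<ge> 0" "\<And>F. finite F \<Longrightarrow> sum f F \<le> B"
  shows "f summable_on UNIV" "infsum f UNIV \<le> B"
proof -
  show s: "f summable_on UNIV"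
    by (rule nonneg_bdd_above_summable_on) (use assms in \<open>auto intro!: bdd_aboveI[of _ B]\<close>)
  show "infsum f UNIV \<le> B" by (rule infsum_le_finite_sums[OF s]) (use assms in auto)
qed

lemma fbnd_col_sum: "fbnd a C \<Longrightarrow> (\<lambda>x. (cmod (a x y))\<^sup>2) summable_on UNIV \<and> infsum (\<lambda>x. (cmod (a x y))\<^sup>2) UNIV \<le> C\<^sup>2"
  using nonneg_summable_bound[of "\<lambda>x. (cmod (a x y))\<^sup>2" "C\<^sup>2"] fbnd_col[of a C] by auto

lemma fbnd_prod:
  assumes a: "fbnd a A" and b: "fbnd b B"
  shows "(\<lambda>y. a x y * b y z) summable_on UNIV" "cmod (infsum (\<lambda>y. a x y * b y z) UNIV) \<le> A * B"
proof -
  have fin: "(\<Sum>y\<in>F. cmod (a x y * b y z)) \<le> A * B" if F: "finite F" for F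
  proof -
    have "(\<Sum>y\<in>F. cmod (a x y * b y z)) = (\<Sum>y\<in>F. \<bar>cmod (a x y)\<bar> * \<bar>cmod (b y z)\<bar>)"
      by (simp add: norm_mult)
    also have "\<dots> \<le> L2_set (\<lambda>y. cmod (a x y)) F * L2_set (\<lambda>y. cmod (b y z)) F"
      by (rule L2_set_mult_ineq)
    also have "\<dots> \<le> A * B"
    proof (rule mult_mono)
      show "L2_set (\<lambda>y. cmod (a x y)) F \<le> A"
        unfolding L2_set_def using fbnd_row[OF a F, of x] fbnd_C0[OF a] real_sqrt_le_mono by fastforce
      show "L2_set (\<lambda>y. cmod (b y z)) F \<le> B"
        unfolding L2_set_def using fbnd_col[OF b F, of z] fbnd_C0[OF b] real_sqrt_le_mono by fastforce
    qed (auto simp: fbnd_C0[OF b] fbnd_C0[OF a])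
    finally show ?thesis .
  qed
  have abs: "(\<lambda>y. cmod (a x y * b y z)) summable_on UNIV" "infsum (\<lambda>y. cmod (a x y * b y z)) UNIV \<le> A * B"
    using nonneg_summable_bound[of "\<lambda>y. cmod (a x y * b y z)" "A * B"] fin by auto
  show "(\<lambda>y. a x y * b y z) summable_on UNIV" using abs(1) by (rule abs_summable_summable)
  show "cmod (infsum (\<lambda>y. a x y * b y z) UNIV) \<le> A * B"
    using norm_infsum_bound[OF abs(1)] abs(2) by linarith
qed

lemma in_roe_fbnd: "in_roe a \<Longrightarrow> \<exists>C. fbnd a C"
  unfolding in_roe_def using bdd_op_bop bop_fbnd by blast

lemma in_roe_approx:
  assumes "in_roe a" "\<epsilon> > 0"
  shows "\<exists>b. bdd_op b \<and> finite_prop b \<and> fbnd (mat_sub a b) \<epsilon>"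
proof -
  obtain b where b: "bdd_op b" "finite_prop b" "opnorm (mat_sub a b) < \<epsilon>"
    using assms unfolding in_roe_def by blast
  obtain A where A: "bop a A" using assms bdd_op_bop unfolding in_roe_def by blast
  obtain B where B: "bop b B" using b bdd_op_bop by blast
  have "fbnd (mat_sub a b) (opnorm (mat_sub a b))" by (rule bop_fbnd[OF bop_sub[OF A B]])
  then have "fbnd (mat_sub a b) \<epsilon>" using fbnd_mono less_imp_le[OF b(3)] by blast
  then show ?thesis using b by blast
qed

lemma diag_linfty: "in_roe a \<Longrightarrow> in_linfty (cond_exp a)"
proof -
  assume ra: "in_roe a"
  obtain C where "fbnd a C" using in_roe_fbnd[OF ra] by blast
  then show ?thesis unfolding cond_exp_def by (intro in_linftyI[of _ C]) (rule fbnd_entry)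
qed

lemma roe_state_E:
  fixes \<phi> :: "('a::metric_space \<Rightarrow> complex) \<Rightarrow> complex"
  assumes st: "linfty_state \<phi>"
  shows "roe_state (\<lambda>a. \<phi> (cond_exp a))"
  unfolding roe_state_def
proof (intro conjI allI impI)
  fix a b :: "'a mat" assume ra: "in_roe a" and rb: "in_roe b"
  have "cond_exp (mat_add a b) = (\<lambda>x. cond_exp a x + cond_exp b x)"
    unfolding cond_exp_def mat_add_def by simp
  then show "\<phi> (cond_exp (mat_add a b)) = \<phi> (cond_exp a) + \<phi> (cond_exp b)"
    using st_add[OF st diag_linfty[OF ra] diag_linfty[OF rb]] by simp
next
  fix c and a :: "'a mat" assume ra: "in_roe a"
  have "cond_exp (mat_scale c a) = (\<lambda>x. c * cond_exp a x)"
    unfolding cond_exp_def mat_scale_def by simp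
  then show "\<phi> (cond_exp (mat_scale c a)) = c * \<phi> (cond_exp a)"
    using st_scale[OF st diag_linfty[OF ra]] by simp
next
  fix a :: "'a mat" assume "in_roe a"
  then obtain C where C: "fbnd a C" using in_roe_fbnd by blast
  define r where "r x = infsum (\<lambda>y. (cmod (a y x))\<^sup>2) UNIV" for x
  have r: "0 \<le> r x \<and> r x \<le> C\<^sup>2" for x
  proof
    show "0 \<le> r x" unfolding r_def by (rule infsum_nonneg) simp
    show "r x \<le> C\<^sup>2" unfolding r_def using fbnd_col_sum[OF C, of x] by blast
  qed
  have e: "cond_exp (mat_mult (mat_adj a) a) x = complex_of_real (r x)" for x
  proof -
    have "((\<lambda>y. complex_of_real ((cmod (a y x))\<^sup>2)) has_sum complex_of_real (r x)) UNIV"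
      unfolding r_def using fbnd_col_sum[OF C, of x] by (intro has_sum_of_real) auto
    then have "((\<lambda>y. cnj (a y x) * a y x) has_sum complex_of_real (r x)) UNIV"
      by (simp only: cnj_sq2)
    then have "infsum (\<lambda>y. cnj (a y x) * a y x) UNIV = complex_of_real (r x)"
      by (rule infsumI)
    then show ?thesis
      unfolding cond_exp_def mat_mult_def mat_adj_def by simp
  qed
  let ?s = "\<lambda>x. complex_of_real (sqrt (r x))"
  have "in_linfty ?s"
  proof (rule in_linftyI[of _ "sqrt (C\<^sup>2)"])
    fix x show "cmod (?s x) \<le> sqrt (C\<^sup>2)" using r[of x] real_sqrt_le_mono[of "r x" "C\<^sup>2"] by simp
  qed
  then have "nonneg_cplx (\<phi> (\<lambda>x. cnj (?s x) * ?s x))" by (rule st_pos[OF st])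
  moreover have "(\<lambda>x. cnj (?s x) * ?s x) = cond_exp (mat_mult (mat_adj a) a)"
  proof
    fix x
    have "sqrt (r x) * sqrt (r x) = r x" using r[of x] by simp
    then show "cnj (?s x) * ?s x = cond_exp (mat_mult (mat_adj a) a) x"
      unfolding e by (simp flip: of_real_mult)
  qed
  ultimately show "nonneg_cplx (\<phi> (cond_exp (mat_mult (mat_adj a) a)))" by simp
next
  show "\<phi> (cond_exp mat_one) = 1" using st_one[OF st] unfolding cond_exp_def mat_one_def by simp
qed

lemma roe_bop: "in_roe a \<Longrightarrow> \<exists>C. bop a C"
proof -
  assume "in_roe a"
  then have "bdd_op a" unfolding in_roe_def by blast
  then show ?thesis by (rule bdd_op_bop)
qed

lemma bop_entry: "bop c C \<Longrightarrow> cmod (c x y) \<le> opnorm c"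
  by (rule fbnd_entry[OF bop_fbnd])

lemma islimpt_reals0: "(0::complex) islimpt \<real>"
  unfolding islimpt_approachable
  apply (intro allI impI)
  subgoal for e
    apply (rule bexI[where x="complex_of_real (e/2)"])
     apply (simp add: dist_0_norm)
    apply simp
    done
  done

lemma sigma_exp:
  "sigma h t b y x = exp (\<i> * complex_of_real t * complex_of_real (h y - h x)) * b y x"
proof -
  have "exp (\<i> * complex_of_real (t * h y)) * exp (- \<i> * complex_of_real (t * h x)) =
        exp (\<i> * complex_of_real (t * h y) + - \<i> * complex_of_real (t * h x))"
    by (rule mult_exp_exp)
  also have "\<dots> = exp (\<i> * complex_of_real t * complex_of_real (h y - h x))"
    by (rule arg_cong[where f=exp]) (simp add: algebra_simps)
  finally have "exp (\<i> * complex_of_real (t * h y)) * exp (- \<i> * complex_of_real (t * h x)) =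
        exp (\<i> * complex_of_real t * complex_of_real (h y - h x))" .
  moreover have "sigma h t b y x = (exp (\<i> * complex_of_real (t * h y)) * exp (- \<i> * complex_of_real (t * h x))) * b y x"
    unfolding sigma_def by (simp only: mult_ac)
  ultimately show ?thesis by simp
qed

lemma entire_entries:
  assumes F: "entire_ext h b F"
  shows "F z y x = exp (\<i> * z * complex_of_real (h y - h x)) * b y x"
proof -
  define G where "G w = F w y x" for w
  define K where "K w = exp (\<i> * w * complex_of_real (h y - h x)) * b y x" for w
  have der: "G field_differentiable (at w0)" for w0
  proof -
    obtain D where D: "in_roe D"
      "((\<lambda>w. opnorm (mat_sub (mat_sub (F w) (F w0)) (mat_scale (w - w0) D)) / cmod (w - w0)) \<longlongrightarrow> 0) (at w0)"
      using F unfolding entire_ext_def by blast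
    have bnd: "cmod ((G w - G w0) / (w - w0) - D y x) \<le>
        opnorm (mat_sub (mat_sub (F w) (F w0)) (mat_scale (w - w0) D)) / cmod (w - w0)" if "w \<noteq> w0" for w
    proof -
      obtain C1 where C1: "bop (F w) C1" using F roe_bop unfolding entire_ext_def by blast
      obtain C2 where C2: "bop (F w0) C2" using F roe_bop unfolding entire_ext_def by blast
      obtain C3 where C3: "bop D C3" using D roe_bop by blast
      obtain C4 where b: "bop (mat_sub (mat_sub (F w) (F w0)) (mat_scale (w - w0) D)) C4"
        using bop_sub[OF bop_sub[OF C1 C2] bop_scale[OF C3]] by blast
      have nz: "w - w0 \<noteq> 0" using that by simp
      have eq: "(G w - G w0) / (w - w0) - D y x =
          (mat_sub (mat_sub (F w) (F w0)) (mat_scale (w - w0) D)) y x / (w - w0)"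
        using nz unfolding G_def mat_sub_def mat_scale_def by (simp add: diff_divide_distrib)
      show ?thesis unfolding eq norm_divide
        by (rule divide_right_mono[OF bop_entry[OF b]]) simp
    qed
    have "((\<lambda>w. (G w - G w0) / (w - w0) - D y x) \<longlongrightarrow> 0) (at w0)"
    proof (rule Lim_null_comparison[OF _ D(2)])
      show "\<forall>\<^sub>F w in at w0. cmod ((G w - G w0) / (w - w0) - D y x) \<le>
         opnorm (mat_sub (mat_sub (F w) (F w0)) (mat_scale (w - w0) D)) / cmod (w - w0)"
        using eventually_neq_at_within[of w0 w0 UNIV] by (rule eventually_mono) (rule bnd)
    qed
    then have "(G has_field_derivative D y x) (at w0)"
      unfolding has_field_derivative_iff by (subst Lim_null) simp
    then show ?thesis unfolding field_differentiable_def by blast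
  qed
  have hol: "(\<lambda>w. G w - K w) holomorphic_on UNIV"
  proof -
    have "G holomorphic_on UNIV" unfolding holomorphic_on_def using der by simp
    moreover have "K holomorphic_on UNIV" unfolding K_def by (intro holomorphic_intros)
    ultimately show ?thesis by (intro holomorphic_intros)
  qed
  have "G z - K z = 0"
  proof (rule analytic_continuation[OF hol open_UNIV connected_UNIV subset_UNIV UNIV_I islimpt_reals0 _ UNIV_I])
    fix w :: complex assume "w \<in> \<real>"
    then obtain t where t: "w = complex_of_real t" by (auto elim: Reals_cases)
    have "G w = sigma h t b y x" unfolding G_def t using F unfolding entire_ext_def by simp
    then show "G w - K w = 0" unfolding K_def t sigma_exp by simp
  qed
  then show ?thesis unfolding G_def K_def by simp
qed

lemma quant_close:
  fixes n :: nat assumes "n > 0"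
  shows "cmod ((complex_of_int \<lfloor>real n * Re z\<rfloor> + \<i> * complex_of_int \<lfloor>real n * Im z\<rfloor>) / of_nat n - z) \<le> 2 / real n"
proof -
  let ?w = "(complex_of_int \<lfloor>real n * Re z\<rfloor> + \<i> * complex_of_int \<lfloor>real n * Im z\<rfloor>) / of_nat n"
  have np: "real n > 0" using assms by simp
  have re: "Re ?w = real_of_int \<lfloor>real n * Re z\<rfloor> / real n" by simp
  have im: "Im ?w = real_of_int \<lfloor>real n * Im z\<rfloor> / real n" by simp
  have fl: "\<bar>real_of_int \<lfloor>real n * t\<rfloor> / real n - t\<bar> \<le> 1 / real n" for t
  proof -
    have a: "real_of_int \<lfloor>real n * t\<rfloor> \<le> real n * t" by (rule of_int_floor_le)
    have b: "real n * t < real_of_int \<lfloor>real n * t\<rfloor> + 1" by (rule real_of_int_floor_add_one_gt)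
    have "\<bar>real_of_int \<lfloor>real n * t\<rfloor> - real n * t\<bar> \<le> 1" using a b by linarith
    then have "\<bar>(real_of_int \<lfloor>real n * t\<rfloor> - real n * t) / real n\<bar> \<le> 1 / real n"
      using np by (simp add: abs_div_pos divide_right_mono)
    moreover have "(real_of_int \<lfloor>real n * t\<rfloor> - real n * t) / real n = real_of_int \<lfloor>real n * t\<rfloor> / real n - t"
      using np by (simp add: diff_divide_distrib)
    ultimately show ?thesis by simp
  qed
  have "cmod (?w - z) \<le> \<bar>Re (?w - z)\<bar> + \<bar>Im (?w - z)\<bar>" by (rule cmod_le)
  also have "\<dots> \<le> 1 / real n + 1 / real n"
    unfolding minus_complex.sel re im by (intro add_mono fl)
  finally show ?thesis by simp
qed

lemma zero_by_bound:
  fixes d :: complex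
  assumes "\<And>n::nat. n > 0 \<Longrightarrow> cmod d \<le> C / real n"
  shows "d = 0"
proof (rule ccontr)
  assume "d \<noteq> 0"
  then have dp: "cmod d > 0" by simp
  obtain n :: nat where n: "C / cmod d < real n" using reals_Archimedean2 by blast
  have "n > 0"
  proof (rule ccontr)
    assume "\<not> n > 0"
    then have "n = 0" by simp
    then have "C / cmod d < 0" using n by simp
    moreover have "cmod d \<le> C / real 1" using assms[of 1] by simp
    ultimately show False using dp by (simp add: divide_less_0_iff)
  qed
  have "C < real n * cmod d" using n dp by (simp add: divide_less_eq mult.commute)
  moreover have "cmod d * real n \<le> C" using assms[OF \<open>n > 0\<close>] \<open>n > 0\<close> by (simp add: le_divide_eq)
  ultimately show False by (simp add: mult.commute)
qed

lemma pt_subset: "partial_translation f A \<Longrightarrow> B \<subseteq> A \<Longrightarrow> partial_translation f B"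
  unfolding partial_translation_def by (meson inj_on_subset subsetD)

context
  fixes \<phi> :: "('a::metric_space \<Rightarrow> complex) \<Rightarrow> complex" and h :: "'a \<Rightarrow> real" and \<beta> :: real
  assumes st: "linfty_state \<phi>"
    and cond: "\<forall>f A. partial_translation f A \<longrightarrow> \<phi> (chi (f ` A)) = \<phi> (g_fun h \<beta> f A)"
begin

lemma simple_case:
  assumes pt: "partial_translation f A"
    and EM: "\<And>x. x \<in> A \<Longrightarrow> exp (\<beta> * (h x - h (f x))) \<le> EM"
    and V: "finite V" "\<And>x. x \<in> A \<Longrightarrow> w x \<in> V"
  shows "\<phi> (\<lambda>x. if x \<in> A then w x * complex_of_real (exp (\<beta> * (h x - h (f x)))) else 0) =
         \<phi> (\<lambda>y. if y \<in> f ` A then w (inv_into A f y) else 0)"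
proof -
  have inj: "inj_on f A" using pt unfolding partial_translation_def by blast
  define Av where "Av v = {x\<in>A. w x = v}" for v
  have eqL: "(\<lambda>x. if x \<in> A then w x * complex_of_real (exp (\<beta> * (h x - h (f x)))) else 0) =
      (\<lambda>x. \<Sum>v\<in>V. v * g_fun h \<beta> f (Av v) x)"
  proof
    fix x
    show "(if x \<in> A then w x * complex_of_real (exp (\<beta> * (h x - h (f x)))) else 0) =
      (\<Sum>v\<in>V. v * g_fun h \<beta> f (Av v) x)"
    proof (cases "x \<in> A")
      case True
      have "(\<Sum>v\<in>V. v * g_fun h \<beta> f (Av v) x) =
          (\<Sum>v\<in>V. if v = w x then w x * complex_of_real (exp (\<beta> * (h x - h (f x)))) else 0)"
        by (rule sum.cong) (use True in \<open>auto simp: g_fun_def Av_def\<close>)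
      also have "\<dots> = w x * complex_of_real (exp (\<beta> * (h x - h (f x))))"
        using sum.delta[OF V(1), of "w x" "\<lambda>_. w x * complex_of_real (exp (\<beta> * (h x - h (f x))))"] V(2)[OF True]
        by simp
      finally show ?thesis using True by simp
    next
      case False
      then show ?thesis by (simp add: g_fun_def Av_def)
    qed
  qed
  have memR: "y \<in> f ` Av v \<longleftrightarrow> y \<in> f ` A \<and> w (inv_into A f y) = v" for y v
  proof
    assume "y \<in> f ` Av v"
    then obtain x where "x \<in> A" "w x = v" "y = f x" unfolding Av_def by blast
    then show "y \<in> f ` A \<and> w (inv_into A f y) = v" using inj by (simp add: inv_into_f_f)
  next
    assume a: "y \<in> f ` A \<and> w (inv_into A f y) = v"
    then have "inv_into A f y \<in> Av v" unfolding Av_def by (simp add: inv_into_into)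
    moreover have "f (inv_into A f y) = y" using a by (simp add: f_inv_into_f)
    ultimately show "y \<in> f ` Av v" by (metis image_eqI)
  qed
  have eqR: "(\<lambda>y. if y \<in> f ` A then w (inv_into A f y) else 0) = (\<lambda>y. \<Sum>v\<in>V. v * chi (f ` Av v) y)"
  proof
    fix y
    show "(if y \<in> f ` A then w (inv_into A f y) else 0) = (\<Sum>v\<in>V. v * chi (f ` Av v) y)"
    proof (cases "y \<in> f ` A")
      case True
      have "(\<Sum>v\<in>V. v * chi (f ` Av v) y) = (\<Sum>v\<in>V. if v = w (inv_into A f y) then w (inv_into A f y) else 0)"
        by (rule sum.cong) (use True in \<open>auto simp: chi_def memR\<close>)
      also have "\<dots> = w (inv_into A f y)"
        using sum.delta[OF V(1), of "w (inv_into A f y)" "\<lambda>_. w (inv_into A f y)"] V(2)[OF inv_into_into[OF True]]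
        by simp
      finally show ?thesis using True by simp
    next
      case False
      then show ?thesis by (simp add: chi_def memR)
    qed
  qed
  have gl: "in_linfty (g_fun h \<beta> f B)" if "B \<subseteq> A" for B
  proof (rule in_linftyI[of _ "max EM 0"])
    fix x show "cmod (g_fun h \<beta> f B x) \<le> max EM 0"
      unfolding g_fun_def using EM[of x] that by (auto simp: le_max_iff_disj)
  qed
  have cl: "in_linfty (chi B)" for B :: "'a set"
    by (rule in_linftyI[of _ 1]) (simp add: chi_def)
  have AvA: "Av v \<subseteq> A" for v unfolding Av_def by blast
  have "\<phi> (\<lambda>x. \<Sum>v\<in>V. v * g_fun h \<beta> f (Av v) x) = (\<Sum>v\<in>V. \<phi> (\<lambda>x. v * g_fun h \<beta> f (Av v) x))"
    by (rule st_sum[OF st V(1)]) (rule in_linfty_mult[OF in_linfty_const gl[OF AvA]])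
  also have "\<dots> = (\<Sum>v\<in>V. v * \<phi> (g_fun h \<beta> f (Av v)))"
    by (rule sum.cong) (auto intro: st_scale[OF st gl[OF AvA]])
  also have "\<dots> = (\<Sum>v\<in>V. v * \<phi> (chi (f ` Av v)))"
    by (rule sum.cong) (use cond pt_subset[OF pt AvA] in auto)
  also have "\<dots> = (\<Sum>v\<in>V. \<phi> (\<lambda>y. v * chi (f ` Av v) y))"
    by (rule sum.cong) (auto intro: st_scale[OF st cl, symmetric])
  also have "\<dots> = \<phi> (\<lambda>y. \<Sum>v\<in>V. v * chi (f ` Av v) y)"
    by (rule st_sum[OF st V(1), symmetric]) (rule in_linfty_mult[OF in_linfty_const cl])
  finally show ?thesis unfolding eqL eqR .
qed


lemma floor_bound:
  fixes t K :: real
  assumes "\<bar>t\<bar> \<le> K"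
  shows "\<lfloor>t\<rfloor> \<in> {-(\<lceil>K\<rceil> + 1)..\<lceil>K\<rceil> + 1}"
proof -
  have c: "K \<le> real_of_int \<lceil>K\<rceil>" by (rule le_of_int_ceiling)
  have "t < real_of_int (\<lceil>K\<rceil> + 1) + 1" using assms c unfolding abs_le_iff of_int_add of_int_1 by linarith
  then have "\<lfloor>t\<rfloor> \<le> \<lceil>K\<rceil> + 1" unfolding floor_le_iff .
  moreover have "real_of_int (-(\<lceil>K\<rceil> + 1)) \<le> t" using assms c unfolding abs_le_iff of_int_add of_int_1 of_int_minus by linarith
  then have "-(\<lceil>K\<rceil> + 1) \<le> \<lfloor>t\<rfloor>" unfolding le_floor_iff .
  ultimately show ?thesis by simp
qed

lemma weighted:
  assumes pt: "partial_translation f A"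
    and EM: "\<And>x. x \<in> A \<Longrightarrow> exp (\<beta> * (h x - h (f x))) \<le> EM"
    and K: "\<And>x. cmod (u x) \<le> K"
  shows "\<phi> (\<lambda>x. if x \<in> A then u x * complex_of_real (exp (\<beta> * (h x - h (f x)))) else 0) =
         \<phi> (\<lambda>y. if y \<in> f ` A then u (inv_into A f y) else 0)"
proof -
  define E where "E x = complex_of_real (exp (\<beta> * (h x - h (f x))))" for x
  define EM' where "EM' = max EM 0"
  have EM0: "EM' \<ge> 0" unfolding EM'_def by simp
  have Eb: "cmod (if x \<in> A then E x else 0) \<le> EM'" for x
    unfolding E_def EM'_def using EM[of x] by (auto simp: le_max_iff_disj)
  define L where "L w = \<phi> (\<lambda>x. if x \<in> A then w x * E x else 0)" for w :: "'a \<Rightarrow> complex"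
  define R where "R w = \<phi> (\<lambda>y. if y \<in> f ` A then w (inv_into A f y) else 0)" for w :: "'a \<Rightarrow> complex"
  have bL: "cmod (if x \<in> A then w x * E x else 0) \<le> B * EM'" if "\<And>x. cmod (w x) \<le> B" for w B x
  proof -
    have "cmod (if x \<in> A then w x * E x else 0) = cmod (w x) * cmod (if x \<in> A then E x else 0)"
      by (simp add: norm_mult)
    also have "\<dots> \<le> B * EM'"
    proof (rule mult_mono[OF that Eb])
      show "0 \<le> B" using that[of x] norm_ge_zero order_trans by blast
    qed simp
    finally show ?thesis .
  qed
  have lL: "in_linfty (\<lambda>x. if x \<in> A then w x * E x else 0)" if "\<And>x. cmod (w x) \<le> B" for w B
    using bL[OF that] by (rule in_linftyI)
  have bR: "cmod (if y \<in> f ` A then w (inv_into A f y) else 0) \<le> B" if "\<And>x. cmod (w x) \<le> B" for w B y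
    using that[of "inv_into A f y"] that[of y] by (auto simp: order_trans[OF norm_ge_zero])
  have lR: "in_linfty (\<lambda>y. if y \<in> f ` A then w (inv_into A f y) else 0)" if "\<And>x. cmod (w x) \<le> B" for w B
    using bR[OF that] by (rule in_linftyI)
  define q where "q n z = (complex_of_int \<lfloor>real n * Re z\<rfloor> + \<i> * complex_of_int \<lfloor>real n * Im z\<rfloor>) / of_nat n"
    for n :: nat and z
  have main: "cmod (L u - R u) \<le> (4 * EM' + 4) / real n" if n: "n > 0" for n :: nat
  proof -
    define w where "w x = q n (u x)" for x
    have close: "cmod (u x - w x) \<le> 2 / real n" for x
      using quant_close[OF n, of "u x"] unfolding w_def q_def by (simp add: norm_minus_commute)
    have wb: "cmod (w x) \<le> K + 2 / real n" for x
      using close[of x] K[of x] norm_triangle_ineq2[of "w x" "u x"] norm_minus_commute[of "w x" "u x"] by linarith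
    define M where "M = \<lceil>real n * K\<rceil> + 1"
    define V where "V = (\<lambda>(i, j). (complex_of_int i + \<i> * complex_of_int j) / of_nat n) ` ({-M..M} \<times> {-M..M})"
    have fV: "finite V" unfolding V_def by simp
    have wV: "w x \<in> V" for x
    proof -
      have "\<bar>real n * Re (u x)\<bar> \<le> real n * K"
        using K[of x] abs_Re_le_cmod[of "u x"] by (simp add: abs_mult mult_left_mono)
      then have a: "\<lfloor>real n * Re (u x)\<rfloor> \<in> {-M..M}" unfolding M_def by (rule floor_bound)
      have "\<bar>real n * Im (u x)\<bar> \<le> real n * K"
        using K[of x] abs_Im_le_cmod[of "u x"] by (simp add: abs_mult mult_left_mono)
      then have b: "\<lfloor>real n * Im (u x)\<rfloor> \<in> {-M..M}" unfolding M_def by (rule floor_bound)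
      show ?thesis unfolding V_def w_def q_def using a b by force
    qed
    have simple: "L w = R w" unfolding L_def R_def E_def
      by (rule simple_case[OF pt EM fV wV])
    have ub: "\<And>x. cmod (u x) \<le> K" by (rule K)
    have dL: "L u - L w = \<phi> (\<lambda>x. if x \<in> A then (u x - w x) * E x else 0)"
    proof -
      have "L u - L w = \<phi> (\<lambda>x. (if x \<in> A then u x * E x else 0) - (if x \<in> A then w x * E x else 0))"
        unfolding L_def by (rule st_diff[OF st lL[OF ub] lL[OF wb], symmetric])
      also have "(\<lambda>x. (if x \<in> A then u x * E x else 0) - (if x \<in> A then w x * E x else 0)) =
          (\<lambda>x. if x \<in> A then (u x - w x) * E x else 0)"
        by (auto simp: algebra_simps)
      finally show ?thesis .
    qed
    have "cmod (L u - L w) \<le> 2 * (2 / real n * EM')"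
      unfolding dL by (rule st_bound[OF st]) (rule bL[OF close])
    moreover have "cmod (R w - R u) \<le> 2 * (2 / real n)"
    proof -
      have "R w - R u = \<phi> (\<lambda>y. (if y \<in> f ` A then w (inv_into A f y) else 0) - (if y \<in> f ` A then u (inv_into A f y) else 0))"
        unfolding R_def by (rule st_diff[OF st lR[OF wb] lR[OF ub], symmetric])
      also have "(\<lambda>y. (if y \<in> f ` A then w (inv_into A f y) else 0) - (if y \<in> f ` A then u (inv_into A f y) else 0)) =
          (\<lambda>y. if y \<in> f ` A then (\<lambda>x. w x - u x) (inv_into A f y) else 0)"
        by auto
      finally have e: "R w - R u = \<phi> (\<lambda>y. if y \<in> f ` A then (\<lambda>x. w x - u x) (inv_into A f y) else 0)" .
      have "\<And>x. cmod (w x - u x) \<le> 2 / real n" using close by (simp add: norm_minus_commute)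
      then show ?thesis unfolding e by (intro st_bound[OF st] bR)
    qed
    moreover have "2 * (2 / real n * EM') + 2 * (2 / real n) = (4 * EM' + 4) / real n"
      using n by (simp add: field_simps)
    ultimately have "cmod (L u - L w) + cmod (R w - R u) \<le> (4 * EM' + 4) / real n"
      by linarith
    moreover have "cmod (L u - R u) \<le> cmod (L u - L w) + cmod (R w - R u)"
      using simple norm_triangle_ineq[of "L u - L w" "R w - R u"] by simp
    ultimately show ?thesis by linarith
  qed
  have "L u - R u = 0" by (rule zero_by_bound) (rule main)
  then show ?thesis unfolding L_def R_def E_def by simp
qed

end

context
  fixes \<phi> :: "('a::metric_space \<Rightarrow> complex) \<Rightarrow> complex" and h :: "'a \<Rightarrow> real" and \<beta> :: real
  assumes st: "linfty_state \<phi>"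
    and cond: "\<forall>f A. partial_translation f A \<longrightarrow> \<phi> (chi (f ` A)) = \<phi> (g_fun h \<beta> f A)"
begin

lemma piece:
  fixes idx :: "'a \<Rightarrow> 'a \<Rightarrow> nat" and R EM K :: real and i j :: nat
  assumes inj: "\<And>x. inj_on (idx x) (cball x R)"
    and fin: "\<And>x::'a. finite (cball x R)"
    and EM: "\<And>x y. dist x y \<le> R \<Longrightarrow> exp (\<beta> * (h x - h y)) \<le> EM"
    and Kb: "\<And>x y. cmod (k x y) \<le> K"
  shows "\<phi> (\<lambda>x. \<Sum>y\<in>cball x R. (if idx x y = i \<and> idx y x = j then k x y else 0) * complex_of_real (exp (\<beta> * (h x - h y)))) =
         \<phi> (\<lambda>y. \<Sum>x\<in>cball y R. (if idx x y = i \<and> idx y x = j then k x y else 0))"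
proof -
  define A where "A = {x. \<exists>y\<in>cball x R. idx x y = i \<and> idx y x = j}"
  define f where "f x = inv_into (cball x R) (idx x) i" for x
  have fA: "f x \<in> cball x R \<and> idx x (f x) = i \<and> idx (f x) x = j" if xA: "x \<in> A" for x
  proof -
    obtain y where y: "y \<in> cball x R" "idx x y = i" "idx y x = j" using xA unfolding A_def by blast
    have "f x = y" unfolding f_def using inv_into_f_f[OF inj y(1)] y(2) by simp
    then show ?thesis using y by simp
  qed
  have key1: "(idx x y = i \<and> idx y x = j) \<longleftrightarrow> (x \<in> A \<and> y = f x)" if "y \<in> cball x R" for x y
  proof
    assume a: "idx x y = i \<and> idx y x = j"
    then have "x \<in> A" unfolding A_def using that by blast
    moreover have "f x = y" unfolding f_def using inv_into_f_f[OF inj that] a by simp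
    ultimately show "x \<in> A \<and> y = f x" by simp
  qed (use fA in auto)
  have injf: "inj_on f A"
  proof (rule inj_onI)
    fix x1 x2 assume x: "x1 \<in> A" "x2 \<in> A" "f x1 = f x2"
    have "x1 \<in> cball (f x1) R" using fA[OF x(1)] by (simp add: dist_commute)
    moreover have "x2 \<in> cball (f x1) R" using fA[OF x(2)] x(3) by (simp add: dist_commute)
    moreover have "idx (f x1) x1 = idx (f x1) x2" using fA[OF x(1)] fA[OF x(2)] x(3) by simp
    ultimately show "x1 = x2" using inj[of "f x1"] by (meson inj_onD)
  qed
  have pt: "partial_translation f A"
    unfolding partial_translation_def using injf fA by (auto intro!: exI[of _ R])
  have key2: "(idx x y = i \<and> idx y x = j) \<longleftrightarrow> (y \<in> f ` A \<and> x = inv_into A f y)" if "x \<in> cball y R" for x y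
  proof
    assume a: "idx x y = i \<and> idx y x = j"
    have yx: "y \<in> cball x R" using that by (simp add: dist_commute)
    then have "x \<in> A \<and> y = f x" using key1 a by blast
    then show "y \<in> f ` A \<and> x = inv_into A f y" using injf by (simp add: inv_into_f_f)
  next
    assume a: "y \<in> f ` A \<and> x = inv_into A f y"
    then have "x \<in> A" by (simp add: inv_into_into)
    moreover have "f x = y" using a by (simp add: f_inv_into_f)
    ultimately show "idx x y = i \<and> idx y x = j" using fA by blast
  qed
  define E where "E x y = complex_of_real (exp (\<beta> * (h x - h y)))" for x y
  have L: "(\<Sum>y\<in>cball x R. (if idx x y = i \<and> idx y x = j then k x y else 0) * E x y) =
      (if x \<in> A then k x (f x) * E x (f x) else 0)" for x
  proof -
    have "(\<Sum>y\<in>cball x R. (if idx x y = i \<and> idx y x = j then k x y else 0) * E x y) =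
        (\<Sum>y\<in>cball x R. if y = f x then (if x \<in> A then k x (f x) * E x (f x) else 0) else 0)"
      by (rule sum.cong) (auto simp: key1)
    also have "\<dots> = (if x \<in> A then k x (f x) * E x (f x) else 0)"
      using sum.delta[OF fin[of x], of "f x" "\<lambda>_. k x (f x) * E x (f x)"] fA[of x] by (cases "x \<in> A") auto
    finally show ?thesis .
  qed
  have Rr: "(\<Sum>x\<in>cball y R. (if idx x y = i \<and> idx y x = j then k x y else 0)) =
      (if y \<in> f ` A then k (inv_into A f y) y else 0)" for y
  proof -
    have "(\<Sum>x\<in>cball y R. (if idx x y = i \<and> idx y x = j then k x y else 0)) =
        (\<Sum>x\<in>cball y R. if x = inv_into A f y then (if y \<in> f ` A then k (inv_into A f y) y else 0) else 0)"
      by (rule sum.cong) (auto simp: key2)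
    also have "\<dots> = (if y \<in> f ` A then k (inv_into A f y) y else 0)"
    proof (cases "y \<in> f ` A")
      case True
      then have "inv_into A f y \<in> A" "f (inv_into A f y) = y" by (auto simp: inv_into_into f_inv_into_f)
      then have "inv_into A f y \<in> cball y R" using fA by (metis dist_commute mem_cball)
      then show ?thesis using True sum.delta[OF fin[of y], of "inv_into A f y" "\<lambda>_. k (inv_into A f y) y"] by simp
    qed simp
    finally show ?thesis .
  qed
  have w: "\<phi> (\<lambda>x. if x \<in> A then k x (f x) * complex_of_real (exp (\<beta> * (h x - h (f x)))) else 0) =
        \<phi> (\<lambda>y. if y \<in> f ` A then k (inv_into A f y) (f (inv_into A f y)) else 0)"
  proof (rule weighted[OF st cond pt])
    fix x assume "x \<in> A" then show "exp (\<beta> * (h x - h (f x))) \<le> EM" using fA EM by simp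
  qed (rule Kb)
  have "(\<lambda>y. if y \<in> f ` A then k (inv_into A f y) (f (inv_into A f y)) else 0) =
        (\<lambda>y. if y \<in> f ` A then k (inv_into A f y) y else 0)"
    by (auto simp: f_inv_into_f)
  then show ?thesis using w unfolding L[unfolded E_def] Rr by simp
qed


lemma sum_cmod_bound:
  fixes g :: "'b \<Rightarrow> complex"
  assumes "finite S" "card S \<le> N" "\<And>y. y \<in> S \<Longrightarrow> cmod (g y) \<le> B" "B \<ge> 0"
  shows "cmod (\<Sum>y\<in>S. g y) \<le> real N * B"
proof -
  have "cmod (\<Sum>y\<in>S. g y) \<le> (\<Sum>y\<in>S. cmod (g y))" by (rule norm_sum)
  also have "\<dots> \<le> of_nat (card S) * B" by (rule sum_bounded_above) (use assms in auto)
  also have "\<dots> \<le> real N * B" using assms by (intro mult_right_mono) auto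
  finally show ?thesis .
qed

lemma kernel:
  fixes R K :: real and k :: "'a \<Rightarrow> 'a \<Rightarrow> complex"
  assumes ulf: "ulf TYPE('a)" and co: "coarse_fun h" and R0: "R \<ge> 0" and Kb: "\<And>x y. cmod (k x y) \<le> K"
  shows "\<phi> (\<lambda>x. \<Sum>y\<in>cball x R. k x y * complex_of_real (exp (\<beta> * (h x - h y)))) =
         \<phi> (\<lambda>y. \<Sum>x\<in>cball y R. k x y)"
proof -
  have "R + 1 > 0" using R0 by simp
  then obtain N :: nat where N: "\<And>x::'a. finite (ball x (R+1)) \<and> card (ball x (R+1)) \<le> N"
    using ulf unfolding ulf_def by blast
  have sub: "cball x R \<subseteq> ball x (R+1)" for x :: 'a by (auto simp: mem_cball mem_ball)
  have fin: "finite (cball x R)" for x :: 'a using N[of x] sub[of x] finite_subset by blast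
  have cardN: "card (cball x R) \<le> N" for x :: 'a
    using N[of x] sub[of x] card_mono order_trans by blast
  obtain s where s: "\<And>x y. dist x y < R + 1 \<Longrightarrow> \<bar>h x - h y\<bar> < s"
    using co \<open>R + 1 > 0\<close> unfolding coarse_fun_def by blast
  define EM where "EM = exp (\<bar>\<beta>\<bar> * s)"
  have EM: "exp (\<beta> * (h x - h y)) \<le> EM" if "dist x y \<le> R" for x y
  proof -
    have "\<beta> * (h x - h y) \<le> \<bar>\<beta>\<bar> * \<bar>h x - h y\<bar>" by (metis abs_ge_self abs_mult)
    also have "\<dots> \<le> \<bar>\<beta>\<bar> * s" using s[of x y] that by (intro mult_left_mono) auto
    finally show ?thesis unfolding EM_def by simp
  qed
  have K0: "K \<ge> 0" using Kb[of undefined undefined] norm_ge_zero order_trans by blast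
  define idx where "idx x = (SOME e. bij_betw e (cball x R) {0..<card (cball x R)})" for x :: 'a
  have bij: "bij_betw (idx x) (cball x R) {0..<card (cball x R)}" for x
    unfolding idx_def by (rule someI_ex[OF ex_bij_betw_finite_nat[OF fin]])
  have inj: "inj_on (idx x) (cball x R)" for x using bij[of x] unfolding bij_betw_def by blast
  have lt: "idx x y < N" if "y \<in> cball x R" for x y
  proof -
    have "idx x y \<in> {0..<card (cball x R)}" using bij[of x] that unfolding bij_betw_def by blast
    then show ?thesis using cardN[of x] by simp
  qed
  define I where "I = {..<N} \<times> {..<N}"
  have fI: "finite I" unfolding I_def by simp
  define kk where "kk p x y = (if idx x y = fst p \<and> idx y x = snd p then k x y else 0)" for p x y
  define E where "E x y = complex_of_real (exp (\<beta> * (h x - h y)))" for x y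
  have split: "k x y = (\<Sum>p\<in>I. kk p x y)" if "y \<in> cball x R" for x y
  proof -
    have xy: "x \<in> cball y R" using that by (simp add: dist_commute)
    have "(\<Sum>p\<in>I. kk p x y) = (\<Sum>p\<in>I. if p = (idx x y, idx y x) then k x y else 0)"
      by (rule sum.cong) (auto simp: kk_def prod_eq_iff)
    also have "\<dots> = k x y" using lt[OF that] lt[OF xy] sum.delta[OF fI, of "(idx x y, idx y x)" "\<lambda>_. k x y"]
      by (simp add: I_def)
    finally show ?thesis by simp
  qed
  have LHS: "(\<lambda>x. \<Sum>y\<in>cball x R. k x y * E x y) = (\<lambda>x. \<Sum>p\<in>I. \<Sum>y\<in>cball x R. kk p x y * E x y)"
  proof
    fix x
    have "(\<Sum>y\<in>cball x R. k x y * E x y) = (\<Sum>y\<in>cball x R. \<Sum>p\<in>I. kk p x y * E x y)"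
      by (rule sum.cong) (auto simp: split sum_distrib_right)
    also have "\<dots> = (\<Sum>p\<in>I. \<Sum>y\<in>cball x R. kk p x y * E x y)" by (rule sum.swap)
    finally show "(\<Sum>y\<in>cball x R. k x y * E x y) = (\<Sum>p\<in>I. \<Sum>y\<in>cball x R. kk p x y * E x y)" .
  qed
  have RHS: "(\<lambda>y. \<Sum>x\<in>cball y R. k x y) = (\<lambda>y. \<Sum>p\<in>I. \<Sum>x\<in>cball y R. kk p x y)"
  proof
    fix y
    have "(\<Sum>x\<in>cball y R. k x y) = (\<Sum>x\<in>cball y R. \<Sum>p\<in>I. kk p x y)"
      by (rule sum.cong) (auto simp: split dist_commute)
    also have "\<dots> = (\<Sum>p\<in>I. \<Sum>x\<in>cball y R. kk p x y)" by (rule sum.swap)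
    finally show "(\<Sum>x\<in>cball y R. k x y) = (\<Sum>p\<in>I. \<Sum>x\<in>cball y R. kk p x y)" .
  qed
  have kkb: "cmod (kk p x y) \<le> K" for p x y unfolding kk_def using Kb[of x y] K0 by auto
  have EM0: "EM \<ge> 0" unfolding EM_def by simp
  have lin1: "in_linfty (\<lambda>x. \<Sum>y\<in>cball x R. kk p x y * E x y)" for p
  proof (rule in_linftyI)
    fix x
    show "cmod (\<Sum>y\<in>cball x R. kk p x y * E x y) \<le> real N * (K * EM)"
    proof (rule sum_cmod_bound[OF fin cardN])
      fix y assume "y \<in> cball x R"
      then have "cmod (E x y) \<le> EM" unfolding E_def using EM[of x y] by (simp add: mem_cball)
      then show "cmod (kk p x y * E x y) \<le> K * EM" unfolding norm_mult
        using kkb[of p x y] K0 by (intro mult_mono) auto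
    qed (use K0 EM0 in simp)
  qed
  have lin2: "in_linfty (\<lambda>y. \<Sum>x\<in>cball y R. kk p x y)" for p
  proof (rule in_linftyI)
    fix y
    show "cmod (\<Sum>x\<in>cball y R. kk p x y) \<le> real N * K"
      by (rule sum_cmod_bound[OF fin cardN]) (use kkb K0 in auto)
  qed
  have "\<phi> (\<lambda>x. \<Sum>y\<in>cball x R. k x y * E x y) = (\<Sum>p\<in>I. \<phi> (\<lambda>x. \<Sum>y\<in>cball x R. kk p x y * E x y))"
    unfolding LHS by (rule st_sum[OF st fI lin1])
  also have "\<dots> = (\<Sum>p\<in>I. \<phi> (\<lambda>y. \<Sum>x\<in>cball y R. kk p x y))"
  proof (rule sum.cong[OF refl])
    fix p
    show "\<phi> (\<lambda>x. \<Sum>y\<in>cball x R. kk p x y * E x y) = \<phi> (\<lambda>y. \<Sum>x\<in>cball y R. kk p x y)"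
      unfolding kk_def E_def
      by (rule piece[OF inj fin _ Kb]) (rule EM)
  qed
  also have "\<dots> = \<phi> (\<lambda>y. \<Sum>x\<in>cball y R. k x y)"
    unfolding RHS by (rule st_sum[OF st fI lin2, symmetric])
  finally show ?thesis unfolding E_def .
qed

end

lemma infsum_diff':
  fixes f g :: "'b \<Rightarrow> complex"
  assumes "f summable_on A" "g summable_on A"
  shows "infsum (\<lambda>x. f x - g x) A = infsum f A - infsum g A"
proof -
  have "infsum (\<lambda>x. f x + - g x) A = infsum f A + infsum (\<lambda>x. - g x) A"
    using assms by (intro infsum_add) (auto simp: summable_on_uminus)
  then show ?thesis by (simp add: infsum_uminus)
qed

lemma diag_diff_l:
  assumes "fbnd a A1" "fbnd a' A2" "fbnd c C"
  shows "cond_exp (mat_mult a c) x - cond_exp (mat_mult a' c) x = infsum (\<lambda>y. mat_sub a a' x y * c y x) UNIV"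
  unfolding cond_exp_def mat_mult_def mat_sub_def
  using infsum_diff'[OF fbnd_prod(1)[OF assms(1,3)] fbnd_prod(1)[OF assms(2,3)], of x x]
  by (simp add: algebra_simps)

lemma diag_diff_r:
  assumes "fbnd a A1" "fbnd a' A2" "fbnd b B"
  shows "cond_exp (mat_mult b a) y - cond_exp (mat_mult b a') y = infsum (\<lambda>x. b y x * mat_sub a a' x y) UNIV"
  unfolding cond_exp_def mat_mult_def mat_sub_def
  using infsum_diff'[OF fbnd_prod(1)[OF assms(3,1)] fbnd_prod(1)[OF assms(3,2)], of y y]
  by (simp add: algebra_simps)

lemma diag_linfty_prod: "fbnd a A \<Longrightarrow> fbnd c C \<Longrightarrow> in_linfty (cond_exp (mat_mult a c))"
  unfolding cond_exp_def mat_mult_def by (rule in_linftyI[of _ "A * C"]) (rule fbnd_prod(2))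

lemma exp_ibeta:
  "exp (\<i> * (\<i> * complex_of_real \<beta>) * complex_of_real (h y - h x)) = complex_of_real (exp (\<beta> * (h x - h y)))"
proof -
  have "\<i> * (\<i> * complex_of_real \<beta>) * complex_of_real (h y - h x) = complex_of_real (\<beta> * (h x - h y))"
    by (simp add: algebra_simps mult.assoc[symmetric])
  then show ?thesis by (subst \<open>_ = _\<close>) (rule exp_of_real)
qed

lemma kms_if:
  fixes \<phi> :: "('a::metric_space \<Rightarrow> complex) \<Rightarrow> complex" and h :: "'a \<Rightarrow> real" and \<beta> :: real
  assumes ulf: "ulf TYPE('a)" and co: "coarse_fun h" and st: "linfty_state \<phi>"
    and cond: "\<forall>f A. partial_translation f A \<longrightarrow> \<phi> (chi (f ` A)) = \<phi> (g_fun h \<beta> f A)"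
  shows "kms_state h \<beta> (\<lambda>a. \<phi> (cond_exp a))"
  unfolding kms_state_def
proof (intro conjI allI impI)
  show "roe_state (\<lambda>a. \<phi> (cond_exp a))" by (rule roe_state_E[OF st])
  fix a b :: "'a mat" and F assume ra: "in_roe a" and rb: "in_roe b" and F: "entire_ext h b F"
  define c where "c = F (\<i> * complex_of_real \<beta>)"
  have rc: "in_roe c" using F unfolding c_def entire_ext_def by blast
  have ce: "c y x = complex_of_real (exp (\<beta> * (h x - h y))) * b y x" for y x
    unfolding c_def entire_entries[OF F] exp_ibeta ..
  obtain Ca where Ca: "fbnd a Ca" using in_roe_fbnd[OF ra] by blast
  obtain Cb where Cb: "fbnd b Cb" using in_roe_fbnd[OF rb] by blast
  obtain Cc where Cc: "fbnd c Cc" using in_roe_fbnd[OF rc] by blast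
  have Cb0: "Cb \<ge> 0" and Cc0: "Cc \<ge> 0" using fbnd_C0 Cb Cc by blast+
  define L where "L a' = \<phi> (cond_exp (mat_mult a' c))" for a'
  define Rt where "Rt a' = \<phi> (cond_exp (mat_mult b a'))" for a'
  have approx: "cmod (L a - Rt a) \<le> 2 * (Cc + Cb) * \<epsilon>" if ep: "\<epsilon> > 0" for \<epsilon>
  proof -
    obtain a' where a': "bdd_op a'" "finite_prop a'" "fbnd (mat_sub a a') \<epsilon>"
      using in_roe_approx[OF ra ep] by blast
    obtain Ca' where Ca': "fbnd a' Ca'" using a'(1) bdd_op_bop bop_fbnd by blast
    have Ca'0: "Ca' \<ge> 0" using fbnd_C0[OF Ca'] .
    obtain R0 where R0: "\<And>x y. a' x y \<noteq> 0 \<Longrightarrow> dist x y \<le> R0" using a'(2) unfolding finite_prop_def by blast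
    define R where "R = max R0 0"
    have R: "\<And>x y. a' x y \<noteq> 0 \<Longrightarrow> dist x y \<le> R" "R \<ge> 0" unfolding R_def using R0 by force+
    have "R + 1 > 0" using R by simp
    then obtain N :: nat where N: "\<And>x::'a. finite (ball x (R+1)) \<and> card (ball x (R+1)) \<le> N"
      using ulf unfolding ulf_def by blast
    have fin: "finite (cball x R)" for x :: 'a
    proof -
      have "cball x R \<subseteq> ball x (R+1)" by (rule subsetI) (simp add: mem_cball mem_ball)
      then show ?thesis using N[of x] finite_subset by blast
    qed
    define k where "k x y = a' x y * b y x" for x y
    have kb: "cmod (k x y) \<le> Ca' * Cb" for x y
      unfolding k_def norm_mult using fbnd_entry[OF Ca'] fbnd_entry[OF Cb] Ca'0 Cb0 by (intro mult_mono) auto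
    have eqL: "cond_exp (mat_mult a' c) = (\<lambda>x. \<Sum>y\<in>cball x R. k x y * complex_of_real (exp (\<beta> * (h x - h y))))"
    proof
      fix x
      have "cond_exp (mat_mult a' c) x = (\<Sum>y\<in>cball x R. a' x y * c y x)"
        unfolding cond_exp_def mat_mult_def
        by (rule fin_supp_infsum(2)[OF fin]) (use R in \<open>force simp: mem_cball\<close>)
      then show "cond_exp (mat_mult a' c) x = (\<Sum>y\<in>cball x R. k x y * complex_of_real (exp (\<beta> * (h x - h y))))"
        unfolding k_def ce by (simp add: mult_ac)
    qed
    have eqR: "cond_exp (mat_mult b a') = (\<lambda>y. \<Sum>x\<in>cball y R. k x y)"
    proof
      fix y
      show "cond_exp (mat_mult b a') y = (\<Sum>x\<in>cball y R. k x y)"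
        unfolding cond_exp_def mat_mult_def k_def
        by (subst fin_supp_infsum(2)[OF fin]) (use R in \<open>force simp: mem_cball dist_commute\<close>, simp add: mult_ac)
    qed
    have mid: "L a' = Rt a'" unfolding L_def Rt_def eqL eqR
      by (rule kernel[OF st cond ulf co R(2) kb])
    have d1: "cmod (L a - L a') \<le> 2 * (\<epsilon> * Cc)"
    proof -
      have "L a - L a' = \<phi> (\<lambda>x. cond_exp (mat_mult a c) x - cond_exp (mat_mult a' c) x)"
        unfolding L_def by (rule st_diff[OF st diag_linfty_prod[OF Ca Cc] diag_linfty_prod[OF Ca' Cc], symmetric])
      also have "\<dots> = \<phi> (\<lambda>x. infsum (\<lambda>y. mat_sub a a' x y * c y x) UNIV)"
        unfolding diag_diff_l[OF Ca Ca' Cc] ..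
      finally have e: "L a - L a' = \<phi> (\<lambda>x. infsum (\<lambda>y. mat_sub a a' x y * c y x) UNIV)" .
      show ?thesis unfolding e by (rule st_bound[OF st]) (rule fbnd_prod(2)[OF a'(3) Cc])
    qed
    have d2: "cmod (Rt a - Rt a') \<le> 2 * (Cb * \<epsilon>)"
    proof -
      have "Rt a - Rt a' = \<phi> (\<lambda>y. cond_exp (mat_mult b a) y - cond_exp (mat_mult b a') y)"
        unfolding Rt_def by (rule st_diff[OF st diag_linfty_prod[OF Cb Ca] diag_linfty_prod[OF Cb Ca'], symmetric])
      also have "\<dots> = \<phi> (\<lambda>y. infsum (\<lambda>x. b y x * mat_sub a a' x y) UNIV)"
        unfolding diag_diff_r[OF Ca Ca' Cb] ..
      finally have e: "Rt a - Rt a' = \<phi> (\<lambda>y. infsum (\<lambda>x. b y x * mat_sub a a' x y) UNIV)" .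
      show ?thesis unfolding e by (rule st_bound[OF st]) (rule fbnd_prod(2)[OF Cb a'(3)])
    qed
    have "cmod (L a - Rt a) \<le> cmod (L a - L a') + cmod (Rt a - Rt a')"
      using mid norm_triangle_ineq4[of "L a - L a'" "Rt a - Rt a'"] by simp
    also have "\<dots> \<le> 2 * (Cc + Cb) * \<epsilon>" using d1 d2 by (simp add: algebra_simps)
    finally show ?thesis .
  qed
  have "L a - Rt a = 0"
  proof (rule zero_by_bound)
    fix n :: nat assume "n > 0"
    then have "cmod (L a - Rt a) \<le> 2 * (Cc + Cb) * (1 / real n)" by (intro approx) simp
    then show "cmod (L a - Rt a) \<le> 2 * (Cc + Cb) / real n" by simp
  qed
  then show "\<phi> (cond_exp (mat_mult a (F (\<i> * complex_of_real \<beta>)))) = \<phi> (cond_exp (mat_mult b a))"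
    unfolding L_def Rt_def c_def by simp
qed

lemma exp_rem_bound:
  fixes u :: complex
  assumes "cmod u \<le> 1"
  shows "cmod (exp u - 1 - u) \<le> (cmod u)\<^sup>2"
proof -
  define r where "r = cmod u"
  have s1: "(\<lambda>k. u ^ (k + 2) /\<^sub>R fact (k + 2)) sums (exp u - (\<Sum>k<2. u ^ k /\<^sub>R fact k))"
    by (intro sums_split_initial_segment exp_converges)
  have s2: "(\<lambda>k. r ^ (k + 2) /\<^sub>R fact (k + 2)) sums (exp r - (\<Sum>k<2. r ^ k /\<^sub>R fact k))"
    by (intro sums_split_initial_segment exp_converges)
  have e1: "(\<Sum>k<2. u ^ k /\<^sub>R fact k) = 1 + u" by (simp add: numeral_2_eq_2)
  have e2: "(\<Sum>k<2. r ^ k /\<^sub>R fact k) = 1 + r" by (simp add: numeral_2_eq_2)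
  have nrm: "norm (u ^ (k + 2) /\<^sub>R fact (k + 2)) = r ^ (k + 2) /\<^sub>R fact (k + 2)" for k
    unfolding r_def by (simp add: norm_power norm_mult del: power_Suc power_add)
  have "exp u - 1 - u = (\<Sum>k. u ^ (k + 2) /\<^sub>R fact (k + 2))"
    using s1 e1 by (simp add: sums_iff)
  also have "norm \<dots> \<le> (\<Sum>k. norm (u ^ (k + 2) /\<^sub>R fact (k + 2)))"
    by (rule summable_norm) (unfold nrm, rule sums_summable[OF s2])
  also have "\<dots> = exp r - 1 - r" unfolding nrm using s2 e2 by (simp add: sums_iff)
  also have "\<dots> \<le> r\<^sup>2" using exp_bound[of r] assms unfolding r_def by simp
  finally show ?thesis unfolding r_def .
qed

lemma gmat_apply:
  assumes inj: "inj_on f A" and supp: "\<And>y x. M y x \<noteq> 0 \<Longrightarrow> x \<in> A \<and> y = f x"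
  shows "(\<lambda>x. M y x * v x) summable_on UNIV" "mat_apply M v y = M y (inv_into A f y) * v (inv_into A f y)"
proof -
  have z: "M y x * v x = 0" if "x \<notin> {inv_into A f y}" for x
  proof (rule ccontr)
    assume "M y x * v x \<noteq> 0"
    then have "M y x \<noteq> 0" by auto
    then have "x \<in> A" "y = f x" using supp by auto
    then have "inv_into A f y = x" using inj by (simp add: inv_into_f_f)
    then show False using that by simp
  qed
  show "(\<lambda>x. M y x * v x) summable_on UNIV"
    by (rule fin_supp_infsum(1)[of "{inv_into A f y}"]) (use z in auto)
  have "infsum (\<lambda>x. M y x * v x) UNIV = (\<Sum>x\<in>{inv_into A f y}. M y x * v x)"
    by (rule fin_supp_infsum(2)[of "{inv_into A f y}"]) (use z in auto)
  then show "mat_apply M v y = M y (inv_into A f y) * v (inv_into A f y)"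
    unfolding mat_apply_def by simp
qed

lemma gmat_l2:
  assumes inj: "inj_on f A" and supp: "\<And>y x. M y x \<noteq> 0 \<Longrightarrow> x \<in> A \<and> y = f x"
    and bnd: "\<And>y x. cmod (M y x) \<le> B" and v: "in_l2 v"
  shows "in_l2 (mat_apply M v)" "l2norm (mat_apply M v) \<le> B * l2norm v"
proof -
  have B0: "B \<ge> 0" using bnd[of undefined undefined] norm_ge_zero order_trans by blast
  define g where "g = inv_into A f"
  have ma: "mat_apply M v y = M y (g y) * v (g y)" for y
    unfolding g_def by (rule gmat_apply(2)[OF inj supp])
  define P where "P y = (cmod (mat_apply M v y))\<^sup>2" for y
  define q where "q x = (cmod (M (f x) x * v x))\<^sup>2" for x
  have Pout: "P y = 0" if "y \<notin> f ` A" for y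
  proof -
    have "M y (g y) = 0" using supp[of y "g y"] that by auto
    then show ?thesis unfolding P_def ma by simp
  qed
  have Pf: "(P \<circ> f) x = q x" if "x \<in> A" for x
    unfolding P_def q_def o_def ma g_def using inj that by (simp add: inv_into_f_f)
  have vs: "(\<lambda>x. (cmod (v x))\<^sup>2) summable_on A"
    using v unfolding in_l2_def by (rule summable_on_subset) simp
  have vsB: "(\<lambda>x. B\<^sup>2 * (cmod (v x))\<^sup>2) summable_on A" using vs by (rule summable_on_cmult_right)
  have qb: "q x \<le> B\<^sup>2 * (cmod (v x))\<^sup>2" for x
  proof -
    have "cmod (M (f x) x * v x) \<le> B * cmod (v x)" unfolding norm_mult
      using bnd B0 by (intro mult_right_mono) auto
    then show ?thesis unfolding q_def by (metis norm_ge_zero power_mono power_mult_distrib)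
  qed
  have qs: "q summable_on A"
  proof (rule summable_on_comparison_test[OF vsB])
    fix x show "q x \<le> B\<^sup>2 * (cmod (v x))\<^sup>2" by (rule qb)
    show "0 \<le> q x" unfolding q_def by simp
  qed
  have Pfs: "(P \<circ> f) summable_on A" using summable_on_cong[of A "P \<circ> f" q] Pf qs by blast
  have PfA: "P summable_on (f ` A)" using Pfs summable_on_reindex[OF inj] by blast
  have PU: "P summable_on UNIV"
    using summable_on_cong_neutral[of UNIV "f ` A" P P] PfA Pout by blast
  then show "in_l2 (mat_apply M v)" unfolding in_l2_def P_def .
  have "infsum P UNIV = infsum P (f ` A)" by (rule infsum_cong_neutral) (use Pout in auto)
  also have "\<dots> = infsum (P \<circ> f) A" by (rule infsum_reindex[OF inj])
  also have "\<dots> = infsum q A" by (rule infsum_cong) (rule Pf)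
  also have "\<dots> \<le> infsum (\<lambda>x. B\<^sup>2 * (cmod (v x))\<^sup>2) A" by (rule infsum_mono[OF qs vsB qb])
  also have "\<dots> = B\<^sup>2 * infsum (\<lambda>x. (cmod (v x))\<^sup>2) A" by (rule infsum_cmult_right') 
  also have "\<dots> \<le> B\<^sup>2 * infsum (\<lambda>x. (cmod (v x))\<^sup>2) UNIV"
    by (intro mult_left_mono infsum_mono_neutral) (use vs v in \<open>auto simp: in_l2_def\<close>)
  also have "\<dots> = (B * l2norm v)\<^sup>2" by (simp add: l2norm_sq power_mult_distrib)
  finally have "(l2norm (mat_apply M v))\<^sup>2 \<le> (B * l2norm v)\<^sup>2" unfolding l2norm_sq P_def .
  then show "l2norm (mat_apply M v) \<le> B * l2norm v"
    using B0 l2norm_ge0 by (meson mult_nonneg_nonneg power2_le_imp_le)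
qed

lemma zero_bop: "bop (\<lambda>x y. 0) 0"
proof -
  have "mat_apply (\<lambda>x y. 0) v = (\<lambda>x. 0)" for v :: "'a \<Rightarrow> complex" unfolding mat_apply_def by simp
  then show ?thesis unfolding bop_def by (simp add: zero_l2)
qed

lemma gmat_roe:
  assumes inj: "inj_on f A" and supp: "\<And>y x. M y x \<noteq> 0 \<Longrightarrow> x \<in> A \<and> y = f x"
    and bnd: "\<And>y x. cmod (M y x) \<le> B" and fp: "finite_prop M"
  shows "in_roe M" "opnorm M \<le> B"
proof -
  have B0: "B \<ge> 0" using bnd[of undefined undefined] norm_ge_zero order_trans by blast
  have bd: "bdd_op M" unfolding bdd_op_def
    using gmat_apply(1)[of f A M, OF inj supp] gmat_l2[of f A M B, OF inj supp bnd] by blast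
  have "bop M B" unfolding bop_def
  proof (intro allI impI conjI)
    fix v :: "'a \<Rightarrow> complex" assume v: "in_l2 v" "l2norm v \<le> 1"
    show "(\<lambda>y. M x y * v y) summable_on UNIV" for x by (rule gmat_apply(1)[of f A M, OF inj supp])
    show "in_l2 (mat_apply M v)" by (rule gmat_l2(1)[of f A M B, OF inj supp bnd v(1)])
    have "l2norm (mat_apply M v) \<le> B * l2norm v" by (rule gmat_l2(2)[of f A M B, OF inj supp bnd v(1)])
    also have "\<dots> \<le> B" using v(2) B0 by (simp add: mult_left_le)
    finally show "l2norm (mat_apply M v) \<le> B" .
  qed
  then show "opnorm M \<le> B" by (rule bop_opnorm_le)
  have z: "mat_sub M M = (\<lambda>x y. 0)" unfolding mat_sub_def by simp
  have "opnorm (mat_sub M M) \<le> 0" unfolding z by (rule bop_opnorm_le[OF zero_bop])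
  then show "in_roe M" unfolding in_roe_def using bd fp by force
qed

lemma kms_only_if:
  fixes \<phi> :: "('a::metric_space \<Rightarrow> complex) \<Rightarrow> complex" and h :: "'a \<Rightarrow> real" and \<beta> :: real
  assumes co: "coarse_fun h" and st: "linfty_state \<phi>"
    and kms: "kms_state h \<beta> (\<lambda>a. \<phi> (cond_exp a))"
    and pt: "partial_translation f A"
  shows "\<phi> (chi (f ` A)) = \<phi> (g_fun h \<beta> f A)"
proof -
  have inj: "inj_on f A" using pt unfolding partial_translation_def by blast
  obtain R0 where R0: "\<And>x. x \<in> A \<Longrightarrow> dist x (f x) \<le> R0" using pt unfolding partial_translation_def by blast
  define R where "R = max R0 0"
  have R: "\<And>x. x \<in> A \<Longrightarrow> dist x (f x) \<le> R" "R \<ge> 0" unfolding R_def using R0 by force+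
  have "R + 1 > 0" using R by simp
  then obtain s where s: "\<And>x y. dist x y < R + 1 \<Longrightarrow> \<bar>h x - h y\<bar> < s"
    using co unfolding coarse_fun_def by blast
  have s0: "s > 0" using s[of undefined undefined] \<open>R + 1 > 0\<close> by simp
  define \<theta> where "\<theta> x = h (f x) - h x" for x
  have th: "\<bar>\<theta> x\<bar> \<le> s" if "x \<in> A" for x
    using s[of "f x" x] R(1)[OF that] unfolding \<theta>_def by (simp add: dist_commute)
  define pm where "pm c = (\<lambda>y x. if x \<in> A \<and> y = f x then c x else (0::complex))" for c :: "'a \<Rightarrow> complex"
  have pm_roe: "in_roe (pm c) \<and> opnorm (pm c) \<le> B" if cb: "\<And>x. x \<in> A \<Longrightarrow> cmod (c x) \<le> B" and B0: "B \<ge> 0" for c B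
  proof -
    have supp: "\<And>y x. pm c y x \<noteq> 0 \<Longrightarrow> x \<in> A \<and> y = f x" unfolding pm_def by (auto split: if_splits)
    have bnd: "\<And>y x. cmod (pm c y x) \<le> B" unfolding pm_def using cb B0 by auto
    have fp: "finite_prop (pm c)" unfolding finite_prop_def
      by (rule exI[of _ R]) (auto simp: pm_def dist_commute R(1) split: if_splits)
    show ?thesis using gmat_roe[of f A "pm c" B, OF inj supp bnd fp] by blast
  qed
  have eb: "cmod (exp (\<i> * z * complex_of_real (\<theta> x))) \<le> exp (cmod z * s)" if "x \<in> A" for z x
  proof -
    have "cmod (exp (\<i> * z * complex_of_real (\<theta> x))) \<le> exp (cmod (\<i> * z * complex_of_real (\<theta> x)))" by (rule norm_exp)
    also have "cmod (\<i> * z * complex_of_real (\<theta> x)) = cmod z * \<bar>\<theta> x\<bar>" by (simp add: norm_mult)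
    also have "cmod z * \<bar>\<theta> x\<bar> \<le> cmod z * s" using th[OF that] by (simp add: mult_left_mono)
    finally show ?thesis by simp
  qed
  define W0 where "W0 = pm (\<lambda>_. 1)"
  define F where "F z = pm (\<lambda>x. exp (\<i> * z * complex_of_real (\<theta> x)))" for z
  define D where "D z = pm (\<lambda>x. \<i> * complex_of_real (\<theta> x) * exp (\<i> * z * complex_of_real (\<theta> x)))" for z
  have rW0: "in_roe W0" unfolding W0_def using pm_roe[of "\<lambda>_. 1" 1] by simp
  have rF: "in_roe (F z)" for z unfolding F_def using pm_roe[OF eb] by simp
  have rD: "in_roe (D z)" for z
  proof -
    have "cmod (\<i> * complex_of_real (\<theta> x) * exp (\<i> * z * complex_of_real (\<theta> x))) \<le> s * exp (cmod z * s)"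
      if "x \<in> A" for x
      unfolding norm_mult using th[OF that] eb[OF that, of z] s0 by (simp add: mult_mono)
    then show ?thesis unfolding D_def
      using pm_roe[of "\<lambda>x. \<i> * complex_of_real (\<theta> x) * exp (\<i> * z * complex_of_real (\<theta> x))" "s * exp (cmod z * s)"] s0
      by auto
  qed
  have Fsig: "F (complex_of_real t) = sigma h t W0" for t
  proof (intro ext)
    fix y x
    show "F (complex_of_real t) y x = sigma h t W0 y x"
      unfolding sigma_exp F_def W0_def pm_def \<theta>_def by auto
  qed
  have der: "((\<lambda>w. opnorm (mat_sub (mat_sub (F w) (F z)) (mat_scale (w - z) (D z))) / cmod (w - z)) \<longlongrightarrow> 0) (at z)" for z
  proof -
    define K where "K = exp (cmod z * s) * s\<^sup>2"
    have K0: "K \<ge> 0" unfolding K_def by simp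
    have Mw: "mat_sub (mat_sub (F w) (F z)) (mat_scale (w - z) (D z)) =
        pm (\<lambda>x. exp (\<i> * z * complex_of_real (\<theta> x)) *
             (exp (\<i> * (w - z) * complex_of_real (\<theta> x)) - 1 - \<i> * (w - z) * complex_of_real (\<theta> x)))" for w
    proof (intro ext)
      fix y x
      have "exp (\<i> * w * complex_of_real (\<theta> x)) =
          exp (\<i> * z * complex_of_real (\<theta> x)) * exp (\<i> * (w - z) * complex_of_real (\<theta> x))"
        by (simp add: mult_exp_exp algebra_simps)
      then show "mat_sub (mat_sub (F w) (F z)) (mat_scale (w - z) (D z)) y x =
          pm (\<lambda>x. exp (\<i> * z * complex_of_real (\<theta> x)) *
             (exp (\<i> * (w - z) * complex_of_real (\<theta> x)) - 1 - \<i> * (w - z) * complex_of_real (\<theta> x))) y x"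
        unfolding mat_sub_def mat_scale_def F_def D_def pm_def by (simp add: algebra_simps)
    qed
    have bnd: "opnorm (mat_sub (mat_sub (F w) (F z)) (mat_scale (w - z) (D z))) \<le> K * (cmod (w - z))\<^sup>2"
      if ws: "cmod (w - z) * s \<le> 1" for w
    proof -
      have "cmod (exp (\<i> * z * complex_of_real (\<theta> x)) *
             (exp (\<i> * (w - z) * complex_of_real (\<theta> x)) - 1 - \<i> * (w - z) * complex_of_real (\<theta> x)))
          \<le> K * (cmod (w - z))\<^sup>2" if x: "x \<in> A" for x
      proof -
        have nu: "cmod (\<i> * (w - z) * complex_of_real (\<theta> x)) = cmod (w - z) * \<bar>\<theta> x\<bar>" by (simp add: norm_mult)
        have nu2: "cmod (w - z) * \<bar>\<theta> x\<bar> \<le> cmod (w - z) * s" using th[OF x] by (simp add: mult_left_mono)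
        have r: "cmod (exp (\<i> * (w - z) * complex_of_real (\<theta> x)) - 1 - \<i> * (w - z) * complex_of_real (\<theta> x))
            \<le> (cmod (w - z) * s)\<^sup>2"
        proof -
          have "cmod (\<i> * (w - z) * complex_of_real (\<theta> x)) \<le> 1" using nu nu2 ws by linarith
          then have "cmod (exp (\<i> * (w - z) * complex_of_real (\<theta> x)) - 1 - \<i> * (w - z) * complex_of_real (\<theta> x))
              \<le> (cmod (\<i> * (w - z) * complex_of_real (\<theta> x)))\<^sup>2" by (rule exp_rem_bound)
          also have "\<dots> \<le> (cmod (w - z) * s)\<^sup>2" unfolding nu using nu2 by (simp add: power_mono)
          finally show ?thesis .
        qed
        have "cmod (exp (\<i> * z * complex_of_real (\<theta> x)) *
             (exp (\<i> * (w - z) * complex_of_real (\<theta> x)) - 1 - \<i> * (w - z) * complex_of_real (\<theta> x)))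
            \<le> exp (cmod z * s) * (cmod (w - z) * s)\<^sup>2"
          unfolding norm_mult by (rule mult_mono[OF eb[OF x] r]) auto
        also have "\<dots> = K * (cmod (w - z))\<^sup>2" unfolding K_def by (simp add: power_mult_distrib)
        finally show ?thesis .
      qed
      then show ?thesis unfolding Mw using pm_roe K0 by simp
    qed
    show ?thesis
    proof (rule Lim_null_comparison)
      show "\<forall>\<^sub>F w in at z. norm (opnorm (mat_sub (mat_sub (F w) (F z)) (mat_scale (w - z) (D z))) / cmod (w - z))
            \<le> K * cmod (w - z)"
        unfolding eventually_at
      proof (intro exI conjI allI impI ballI)
        show "0 < 1 / (s + 1)" using s0 by simp
        fix w :: complex assume w: "w \<noteq> z \<and> dist w z < 1 / (s + 1)"
        have "cmod (w - z) * s \<le> 1"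
        proof -
          have "cmod (w - z) < 1 / (s + 1)" using w by (simp add: dist_norm)
          then have "cmod (w - z) * (s + 1) < 1" using s0 by (simp add: field_simps)
          then show ?thesis using s0 by (simp add: algebra_simps) (smt (verit) norm_ge_zero)
        qed
        then have b: "opnorm (mat_sub (mat_sub (F w) (F z)) (mat_scale (w - z) (D z))) \<le> K * (cmod (w - z))\<^sup>2"
          by (rule bnd)
        have nz: "cmod (w - z) > 0" using w by simp
        have op0: "opnorm (mat_sub (mat_sub (F w) (F z)) (mat_scale (w - z) (D z))) \<ge> 0"
        proof -
          obtain C where "bop (mat_sub (mat_sub (F w) (F z)) (mat_scale (w - z) (D z))) C"
            using bop_sub[OF bop_sub bop_scale] roe_bop[OF rF] roe_bop[OF rD] by meson
          then show ?thesis using bop_fbnd fbnd_C0 by blast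
        qed
        show "norm (opnorm (mat_sub (mat_sub (F w) (F z)) (mat_scale (w - z) (D z))) / cmod (w - z))
            \<le> K * cmod (w - z)"
          using b nz op0 by (simp add: divide_le_eq power2_eq_square mult.assoc)
      qed
      have "((\<lambda>w. K * cmod (w - z)) \<longlongrightarrow> K * cmod (z - z)) (at z)" by (intro tendsto_intros)
      then show "((\<lambda>w. K * cmod (w - z)) \<longlongrightarrow> 0) (at z)" by simp
    qed
  qed
  have ent: "entire_ext h W0 F"
    unfolding entire_ext_def using rF Fsig rD der by blast
  define a where "a = (\<lambda>x y. if x \<in> A \<and> y = f x then 1 else (0::complex))"
  have ra: "in_roe a"
  proof -
    have inj': "inj_on (inv_into A f) (f ` A)" by (rule inj_on_inv_into) simp
    have supp: "\<And>x y. a x y \<noteq> 0 \<Longrightarrow> y \<in> f ` A \<and> x = inv_into A f y"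
      unfolding a_def using inj by (auto simp: inv_into_f_f split: if_splits)
    have bnd: "\<And>x y. cmod (a x y) \<le> 1" unfolding a_def by simp
    have fp: "finite_prop a" unfolding finite_prop_def
      by (rule exI[of _ R]) (auto simp: a_def R(1) split: if_splits)
    show ?thesis using gmat_roe(1)[of "inv_into A f" "f ` A" a 1, OF inj' supp bnd fp] .
  qed
  have k: "\<phi> (cond_exp (mat_mult a (F (\<i> * complex_of_real \<beta>)))) = \<phi> (cond_exp (mat_mult W0 a))"
    using kms ra rW0 ent unfolding kms_state_def by blast
  have d1: "cond_exp (mat_mult a (F (\<i> * complex_of_real \<beta>))) = g_fun h \<beta> f A"
  proof
    fix x
    have "infsum (\<lambda>y. a x y * F (\<i> * complex_of_real \<beta>) y x) UNIV = (\<Sum>y\<in>{f x}. a x y * F (\<i> * complex_of_real \<beta>) y x)"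
      by (rule fin_supp_infsum(2)) (auto simp: a_def)
    also have "\<dots> = g_fun h \<beta> f A x"
      unfolding g_fun_def a_def F_def pm_def \<theta>_def using exp_ibeta[of \<beta> h "f x" x] by simp
    finally show "cond_exp (mat_mult a (F (\<i> * complex_of_real \<beta>))) x = g_fun h \<beta> f A x"
      unfolding cond_exp_def mat_mult_def .
  qed
  have d2: "cond_exp (mat_mult W0 a) = chi (f ` A)"
  proof
    fix y
    have "infsum (\<lambda>x. W0 y x * a x y) UNIV = (\<Sum>x\<in>{inv_into A f y}. W0 y x * a x y)"
      by (rule fin_supp_infsum(2)) (auto simp: a_def W0_def pm_def inj inv_into_f_f)
    also have "\<dots> = chi (f ` A) y"
    proof (cases "y \<in> f ` A")
      case True
      then have "inv_into A f y \<in> A" "f (inv_into A f y) = y" by (auto simp: inv_into_into f_inv_into_f)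
      then show ?thesis using True unfolding chi_def a_def W0_def pm_def by simp
    next
      case False
      then have "\<not> (inv_into A f y \<in> A \<and> y = f (inv_into A f y))" by blast
      then show ?thesis using False unfolding chi_def a_def W0_def pm_def by simp
    qed
    finally show "cond_exp (mat_mult W0 a) y = chi (f ` A) y" unfolding cond_exp_def mat_mult_def .
  qed
  show ?thesis using k unfolding d1 d2 by simp
qed

theorem theorem2p2:
  fixes h :: "'a::metric_space \<Rightarrow> real" and \<beta> :: real
    and \<phi> :: "('a \<Rightarrow> complex) \<Rightarrow> complex"
  assumes "ulf TYPE('a)"
    and "coarse_fun h"
    and "linfty_state \<phi>"
  shows "kms_state h \<beta> (\<lambda>a. \<phi> (cond_exp a)) \<longleftrightarrow>
    (\<forall>f A. partial_translation f A \<longrightarrow> \<phi> (chi (f ` A)) = \<phi> (g_fun h \<beta> f A))"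
proof
  assume kms: "kms_state h \<beta> (\<lambda>a. \<phi> (cond_exp a))"
  show "\<forall>f A. partial_translation f A \<longrightarrow> \<phi> (chi (f ` A)) = \<phi> (g_fun h \<beta> f A)"
    using kms_only_if[OF assms(2) assms(3) kms] by blast
next
  assume cond: "\<forall>f A. partial_translation f A \<longrightarrow> \<phi> (chi (f ` A)) = \<phi> (g_fun h \<beta> f A)"
  show "kms_state h \<beta> (\<lambda>a. \<phi> (cond_exp a))"
    by (rule kms_if[OF assms(1) assms(2) assms(3) cond])
qed

end
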